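(* Let $R$ and $S$ be rings, $M$ an $S$-$R$-bimodule, and $\Lambda=\begin{pmatrix} R&0\\ M&S\end{pmatrix}$. If $M\neq0$ and $\operatorname{pdim}M_R<\infty$, then $\operatorname{pdim}M_R+1\le\operatorname{fpdim}\Lambda$.
   Context: $\Lambda$ is the triangular matrix ring with matrix multiplication using the bimodule structure of $M$. The finitistic projective dimension $\operatorname{fpdim}\Lambda$ is the supremum of the projective dimensions of those finitely generated right $\Lambda$-modules that have finite projective dimension. *)

theory Defs
  imports "HOL-Algebra.Ring" "HOL-Library.Extended_Nat"
begin

record ('r, 'm) rmod =
  mcarrier :: "'m set"
  mzero :: 'm
  madd :: "'m \<Rightarrow> 'm \<Rightarrow> 'm"
  mact :: "'m \<Rightarrow> 'r \<Rightarrow> 'm"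

definition add_group :: "('r, 'm) rmod \<Rightarrow> 'm monoid" where
  "add_group M = \<lparr>carrier = mcarrier M, mult = madd M, one = mzero M\<rparr>"

definition right_module :: "('r, 'a) ring_scheme \<Rightarrow> ('r, 'm) rmod \<Rightarrow> bool" where
  "right_module R M \<longleftrightarrow> ring R \<and> comm_group (add_group M) \<and>
     (\<forall>x\<in>mcarrier M. \<forall>r\<in>carrier R. mact M x r \<in> mcarrier M) \<and>
     (\<forall>x\<in>mcarrier M. \<forall>r\<in>carrier R. \<forall>s\<in>carrier R.
        mact M x (r \<oplus>\<^bsub>R\<^esub> s) = madd M (mact M x r) (mact M x s)) \<and>
     (\<forall>x\<in>mcarrier M. \<forall>y\<in>mcarrier M. \<forall>r\<in>carrier R.
        mact M (madd M x y) r = madd M (mact M x r) (mact M y r)) \<and>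
     (\<forall>x\<in>mcarrier M. \<forall>r\<in>carrier R. \<forall>s\<in>carrier R.
        mact M x (r \<otimes>\<^bsub>R\<^esub> s) = mact M (mact M x r) s) \<and>
     (\<forall>x\<in>mcarrier M. mact M x \<one>\<^bsub>R\<^esub> = x)"

definition msum :: "('r, 'm) rmod \<Rightarrow> ('i \<Rightarrow> 'm) \<Rightarrow> 'i set \<Rightarrow> 'm" where
  "msum M f A = finprod (add_group M) f A"

definition lin_map :: "('r, 'a) ring_scheme \<Rightarrow> ('r, 'm) rmod \<Rightarrow> ('r, 'n) rmod
                        \<Rightarrow> ('m \<Rightarrow> 'n) \<Rightarrow> bool" where
  "lin_map R M N f \<longleftrightarrow> right_module R M \<and> right_module R N \<and>
     f \<in> mcarrier M \<rightarrow> mcarrier N \<and>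
     (\<forall>x\<in>mcarrier M. \<forall>y\<in>mcarrier M. f (madd M x y) = madd N (f x) (f y)) \<and>
     (\<forall>x\<in>mcarrier M. \<forall>r\<in>carrier R. f (mact M x r) = mact N (f x) r)"

definition mker :: "('r, 'm) rmod \<Rightarrow> ('r, 'n) rmod \<Rightarrow> ('m \<Rightarrow> 'n) \<Rightarrow> 'm set" where
  "mker M N f = {x \<in> mcarrier M. f x = mzero N}"

definition free_rmod :: "('r, 'a) ring_scheme \<Rightarrow> 'i set \<Rightarrow> ('r, 'i \<Rightarrow> 'r) rmod" where
  "free_rmod R I =
     \<lparr>mcarrier = {\<phi>. (\<forall>i. \<phi> i \<in> carrier R) \<and> (\<forall>i. i \<notin> I \<longrightarrow> \<phi> i = \<zero>\<^bsub>R\<^esub>)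
                     \<and> finite {i. \<phi> i \<noteq> \<zero>\<^bsub>R\<^esub>}},
      mzero = (\<lambda>i. \<zero>\<^bsub>R\<^esub>),
      madd = (\<lambda>\<phi> \<psi> i. \<phi> i \<oplus>\<^bsub>R\<^esub> \<psi> i),
      mact = (\<lambda>\<phi> r i. \<phi> i \<otimes>\<^bsub>R\<^esub> r)\<rparr>"

definition lincomb :: "('r, 'm) rmod \<Rightarrow> ('m \<Rightarrow> 'r) \<Rightarrow> 'r \<Rightarrow> 'm" where
  "lincomb P \<phi> z = msum P (\<lambda>p. mact P p (\<phi> p)) {p \<in> mcarrier P. \<phi> p \<noteq> z}"

text \<open>Projective = direct summand of a free module, i.e. the canonical epimorphism
  from the free module on the underlying set splits.\<close>
definition projective :: "('r, 'a) ring_scheme \<Rightarrow> ('r, 'm) rmod \<Rightarrow> bool" where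
  "projective R P \<longleftrightarrow> right_module R P \<and>
     (\<exists>s. lin_map R P (free_rmod R (mcarrier P)) s \<and>
          (\<forall>x\<in>mcarrier P. lincomb P (s x) \<zero>\<^bsub>R\<^esub> = x))"

text \<open>The modules \<open>P_k\<close> are taken with
  carriers in the type of finitely supported functions on \<open>'m \<times> 'r \<times> nat\<close>, which is
  large enough to contain free modules of rank \<open>max(|M|,|R|,\<aleph>\<^sub>0)\<close> and hence
  a resolution of minimal length of every module \<open>M\<close> (syzygies).\<close>
definition pdim_le :: "('r, 'a) ring_scheme \<Rightarrow> ('r, 'm) rmod \<Rightarrow> nat \<Rightarrow> bool" where
  "pdim_le R M n \<longleftrightarrow>
     (\<exists>(P :: nat \<Rightarrow> ('r, ('m \<times> 'r \<times> nat) \<Rightarrow> 'r) rmod) d \<epsilon>.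
        (\<forall>k\<le>n. projective R (P k)) \<and>
        lin_map R (P 0) M \<epsilon> \<and> \<epsilon> ` mcarrier (P 0) = mcarrier M \<and>
        (\<forall>k<n. lin_map R (P (Suc k)) (P k) (d k)) \<and>
        mker (P 0) M \<epsilon> = (if n = 0 then {mzero (P 0)} else d 0 ` mcarrier (P 1)) \<and>
        (\<forall>k<n. mker (P (Suc k)) (P k) (d k) =
                 (if Suc k < n then d (Suc k) ` mcarrier (P (Suc (Suc k)))
                  else {mzero (P (Suc k))})))"

definition pdim :: "('r, 'a) ring_scheme \<Rightarrow> ('r, 'm) rmod \<Rightarrow> enat" where
  "pdim R M = Inf {enat n | n. pdim_le R M n}"

definition fin_gen :: "('r, 'a) ring_scheme \<Rightarrow> ('r, 'm) rmod \<Rightarrow> bool" where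
  "fin_gen R M \<longleftrightarrow> right_module R M \<and>
     (\<exists>G. finite G \<and> G \<subseteq> mcarrier M \<and>
        (\<forall>x\<in>mcarrier M. \<exists>c. (\<forall>g\<in>G. c g \<in> carrier R) \<and>
                              x = msum M (\<lambda>g. mact M g (c g)) G))"

text \<open>Every finitely generated module is isomorphic
  to a quotient of some \<open>\<Lambda>^n\<close>, whose elements are sets of lists; so it suffices to
  range over modules with carrier in \<open>'l list set\<close>.\<close>
definition fpdim :: "('l, 'b) ring_scheme \<Rightarrow> enat" where
  "fpdim A = Sup {pdim A N | N :: ('l, 'l list set) rmod. fin_gen A N \<and> pdim A N < \<infinity>}"

definition bimodule :: "('s, 'b) ring_scheme \<Rightarrow> ('r, 'a) ring_scheme \<Rightarrow> ('r, 'm) rmod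
                         \<Rightarrow> ('s \<Rightarrow> 'm \<Rightarrow> 'm) \<Rightarrow> bool" where
  "bimodule S R M L \<longleftrightarrow> ring S \<and> right_module R M \<and>
     (\<forall>s\<in>carrier S. \<forall>x\<in>mcarrier M. L s x \<in> mcarrier M) \<and>
     (\<forall>s\<in>carrier S. \<forall>t\<in>carrier S. \<forall>x\<in>mcarrier M.
        L (s \<oplus>\<^bsub>S\<^esub> t) x = madd M (L s x) (L t x)) \<and>
     (\<forall>s\<in>carrier S. \<forall>x\<in>mcarrier M. \<forall>y\<in>mcarrier M.
        L s (madd M x y) = madd M (L s x) (L s y)) \<and>
     (\<forall>s\<in>carrier S. \<forall>t\<in>carrier S. \<forall>x\<in>mcarrier M.
        L (s \<otimes>\<^bsub>S\<^esub> t) x = L s (L t x)) \<and>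
     (\<forall>x\<in>mcarrier M. L \<one>\<^bsub>S\<^esub> x = x) \<and>
     (\<forall>s\<in>carrier S. \<forall>x\<in>mcarrier M. \<forall>r\<in>carrier R.
        mact M (L s x) r = L s (mact M x r))"

text \<open>\<open>\<Lambda> = [[R,0],[M,S]]\<close>; the matrix \<open>[[r,0],[m,s]]\<close> is encoded as \<open>(r,m,s)\<close>, and
  \<open>[[r,0],[m,s]]\<cdot>[[r',0],[m',s']] = [[r r',0],[m r' + s m', s s']]\<close>.\<close>
definition tri_ring :: "('r, 'a) ring_scheme \<Rightarrow> ('s, 'b) ring_scheme \<Rightarrow> ('r, 'm) rmod
                        \<Rightarrow> ('s \<Rightarrow> 'm \<Rightarrow> 'm) \<Rightarrow> ('r \<times> 'm \<times> 's) ring" where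
  "tri_ring R S M L =
     \<lparr>carrier = carrier R \<times> mcarrier M \<times> carrier S,
      mult = (\<lambda>(r, m, s) (r', m', s').
                (r \<otimes>\<^bsub>R\<^esub> r', madd M (mact M m r') (L s m'), s \<otimes>\<^bsub>S\<^esub> s')),
      one = (\<one>\<^bsub>R\<^esub>, mzero M, \<one>\<^bsub>S\<^esub>),
      zero = (\<zero>\<^bsub>R\<^esub>, mzero M, \<zero>\<^bsub>S\<^esub>),
      add = (\<lambda>(r, m, s) (r', m', s'). (r \<oplus>\<^bsub>R\<^esub> r', madd M m m', s \<oplus>\<^bsub>S\<^esub> s'))\<rparr>"

end

theory Submission
  imports Defs
begin

lemma ag_simps[simp]: "carrier (add_group X) = mcarrier X" "mult (add_group X) = madd X"
  "one (add_group X) = mzero X"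
  by (simp_all add: add_group_def)

definition mneg :: "('r,'m) rmod \<Rightarrow> 'm \<Rightarrow> 'm" where
  "mneg X x = inv\<^bsub>add_group X\<^esub> x"

definition msub :: "('r,'m) rmod \<Rightarrow> 'm \<Rightarrow> 'm \<Rightarrow> 'm" where
  "msub X x y = madd X x (mneg X y)"

context
  fixes A :: "('r,'a) ring_scheme" and X :: "('r,'m) rmod"
  assumes rm: "right_module A X"
begin

lemma rm_ring: "ring A" using rm by (simp add: right_module_def)
lemma rm_cg: "comm_group (add_group X)" using rm by (simp add: right_module_def)

interpretation G: comm_group "add_group X" by (rule rm_cg)
interpretation A: ring A by (rule rm_ring)

lemma rm_zero[simp]: "mzero X \<in> mcarrier X" using G.one_closed by simp
lemma rm_add[simp]: "x \<in> mcarrier X \<Longrightarrow> y \<in> mcarrier X \<Longrightarrow> madd X x y \<in> mcarrier X"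
  using G.m_closed by simp
lemma rm_act[simp]: "x \<in> mcarrier X \<Longrightarrow> r \<in> carrier A \<Longrightarrow> mact X x r \<in> mcarrier X"
  using rm by (simp add: right_module_def)
lemma rm_comm: "x \<in> mcarrier X \<Longrightarrow> y \<in> mcarrier X \<Longrightarrow> madd X x y = madd X y x"
  using G.m_comm by simp
lemma rm_assoc: "x \<in> mcarrier X \<Longrightarrow> y \<in> mcarrier X \<Longrightarrow> z \<in> mcarrier X \<Longrightarrow>
   madd X (madd X x y) z = madd X x (madd X y z)"
  using G.m_assoc by simp
lemma rm_lcomm: "x \<in> mcarrier X \<Longrightarrow> y \<in> mcarrier X \<Longrightarrow> z \<in> mcarrier X \<Longrightarrow>
   madd X x (madd X y z) = madd X y (madd X x z)"
  using G.m_lcomm by simp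
lemma rm_zl[simp]: "x \<in> mcarrier X \<Longrightarrow> madd X (mzero X) x = x" using G.l_one by simp
lemma rm_zr[simp]: "x \<in> mcarrier X \<Longrightarrow> madd X x (mzero X) = x" using G.r_one by simp
lemma rm_neg[simp]: "x \<in> mcarrier X \<Longrightarrow> mneg X x \<in> mcarrier X"
  unfolding mneg_def using G.inv_closed by simp
lemma rm_negl[simp]: "x \<in> mcarrier X \<Longrightarrow> madd X (mneg X x) x = mzero X"
  unfolding mneg_def using G.l_inv by simp
lemma rm_negr[simp]: "x \<in> mcarrier X \<Longrightarrow> madd X x (mneg X x) = mzero X"
  unfolding mneg_def using G.r_inv by simp
lemma rm_sub[simp]: "x \<in> mcarrier X \<Longrightarrow> y \<in> mcarrier X \<Longrightarrow> msub X x y \<in> mcarrier X"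
  by (simp add: msub_def)
lemma rm_rcancel: "x \<in> mcarrier X \<Longrightarrow> y \<in> mcarrier X \<Longrightarrow> z \<in> mcarrier X \<Longrightarrow>
   (madd X y x = madd X z x) = (y = z)"
  using G.right_cancel by simp
lemma rm_lcancel: "x \<in> mcarrier X \<Longrightarrow> y \<in> mcarrier X \<Longrightarrow> z \<in> mcarrier X \<Longrightarrow>
   (madd X x y = madd X x z) = (y = z)"
  using rm_rcancel[of x y z] rm_comm[of x y] rm_comm[of x z] by simp
lemma rm_neg_neg[simp]: "x \<in> mcarrier X \<Longrightarrow> mneg X (mneg X x) = x"
  unfolding mneg_def using G.inv_inv by simp
lemma rm_add_eq0: "a \<in> mcarrier X \<Longrightarrow> b \<in> mcarrier X \<Longrightarrow> madd X a b = mzero X \<Longrightarrow> a = mneg X b"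
  unfolding mneg_def using G.inv_equality[of a b] by simp
lemma rm_self_add: "a \<in> mcarrier X \<Longrightarrow> (a = madd X a a) = (a = mzero X)"
  using G.l_cancel_one'[of a a] by simp
lemma rm_sub_eq0: "x \<in> mcarrier X \<Longrightarrow> y \<in> mcarrier X \<Longrightarrow> (msub X x y = mzero X) = (x = y)"
proof -
  assume x: "x \<in> mcarrier X" and y: "y \<in> mcarrier X"
  have "(msub X x y = mzero X) = (madd X (msub X x y) y = madd X (mzero X) y)"
    using x y rm_rcancel[of y "msub X x y" "mzero X"] by simp
  moreover have "madd X (msub X x y) y = x" using x y
    by (simp add: msub_def rm_assoc)
  ultimately show ?thesis using y by auto
qed
lemma rm_sub_self[simp]: "x \<in> mcarrier X \<Longrightarrow> msub X x x = mzero X"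
  by (simp add: msub_def)
lemma rm_sub_zero[simp]: "x \<in> mcarrier X \<Longrightarrow> msub X x (mzero X) = x"
  unfolding msub_def mneg_def using G.inv_one by simp
lemma rm_neg_add: "x \<in> mcarrier X \<Longrightarrow> y \<in> mcarrier X \<Longrightarrow>
   mneg X (madd X x y) = madd X (mneg X x) (mneg X y)"
  unfolding mneg_def using G.inv_mult by (simp add: G.m_comm)
lemma rm_sub_add_cancel: "x \<in> mcarrier X \<Longrightarrow> y \<in> mcarrier X \<Longrightarrow> madd X (msub X x y) y = x"
  by (simp add: msub_def rm_assoc)
lemma rm_sub_sub: "x \<in> mcarrier X \<Longrightarrow> y \<in> mcarrier X \<Longrightarrow> msub X x (msub X x y) = y"
proof -
  assume x: "x \<in> mcarrier X" and y: "y \<in> mcarrier X"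
  have "mneg X (msub X x y) = madd X (mneg X x) y"
    using x y by (simp add: msub_def rm_neg_add)
  then have "msub X x (msub X x y) = madd X x (madd X (mneg X x) y)"
    by (simp add: msub_def)
  also have "\<dots> = y" using x y by (simp add: rm_assoc[symmetric])
  finally show ?thesis .
qed

lemma rm_act_add: "x \<in> mcarrier X \<Longrightarrow> r \<in> carrier A \<Longrightarrow> s \<in> carrier A \<Longrightarrow>
  mact X x (r \<oplus>\<^bsub>A\<^esub> s) = madd X (mact X x r) (mact X x s)"
  using rm by (simp add: right_module_def)
lemma rm_add_act: "x \<in> mcarrier X \<Longrightarrow> y \<in> mcarrier X \<Longrightarrow> r \<in> carrier A \<Longrightarrow>
  mact X (madd X x y) r = madd X (mact X x r) (mact X y r)"
  using rm by (simp add: right_module_def)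
lemma rm_act_mult: "x \<in> mcarrier X \<Longrightarrow> r \<in> carrier A \<Longrightarrow> s \<in> carrier A \<Longrightarrow>
  mact X x (r \<otimes>\<^bsub>A\<^esub> s) = mact X (mact X x r) s"
  using rm by (simp add: right_module_def)
lemma rm_act_one[simp]: "x \<in> mcarrier X \<Longrightarrow> mact X x \<one>\<^bsub>A\<^esub> = x"
  using rm by (simp add: right_module_def)

lemma rm_act_zero[simp]: "x \<in> mcarrier X \<Longrightarrow> mact X x \<zero>\<^bsub>A\<^esub> = mzero X"
proof -
  assume x: "x \<in> mcarrier X"
  have "mact X x \<zero>\<^bsub>A\<^esub> = madd X (mact X x \<zero>\<^bsub>A\<^esub>) (mact X x \<zero>\<^bsub>A\<^esub>)"
    using x rm_act_add[of x "\<zero>\<^bsub>A\<^esub>" "\<zero>\<^bsub>A\<^esub>"] by simp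
  then show ?thesis using x rm_self_add[of "mact X x \<zero>\<^bsub>A\<^esub>"] by simp
qed

lemma rm_zero_act[simp]: "r \<in> carrier A \<Longrightarrow> mact X (mzero X) r = mzero X"
proof -
  assume r: "r \<in> carrier A"
  have "mact X (mzero X) r = madd X (mact X (mzero X) r) (mact X (mzero X) r)"
    using r rm_add_act[of "mzero X" "mzero X" r] by simp
  then show ?thesis using r rm_self_add[of "mact X (mzero X) r"] by simp
qed

lemma rm_neg_act: "x \<in> mcarrier X \<Longrightarrow> r \<in> carrier A \<Longrightarrow> mact X (mneg X x) r = mneg X (mact X x r)"
proof -
  assume x: "x \<in> mcarrier X" and r: "r \<in> carrier A"
  have "madd X (mact X (mneg X x) r) (mact X x r) = mzero X"
    using x r by (simp add: rm_add_act[symmetric])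
  then show ?thesis using x r by (simp add: rm_add_eq0)
qed

lemma rm_sub_act: "x \<in> mcarrier X \<Longrightarrow> y \<in> mcarrier X \<Longrightarrow> r \<in> carrier A \<Longrightarrow>
   mact X (msub X x y) r = msub X (mact X x r) (mact X y r)"
  by (simp add: msub_def rm_add_act rm_neg_act)

end

lemma lin_mapD:
  assumes "lin_map A X Y f"
  shows "right_module A X" "right_module A Y"
    "\<And>x. x \<in> mcarrier X \<Longrightarrow> f x \<in> mcarrier Y"
    "\<And>x y. x \<in> mcarrier X \<Longrightarrow> y \<in> mcarrier X \<Longrightarrow> f (madd X x y) = madd Y (f x) (f y)"
    "\<And>x r. x \<in> mcarrier X \<Longrightarrow> r \<in> carrier A \<Longrightarrow> f (mact X x r) = mact Y (f x) r"
  using assms by (auto simp: lin_map_def)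

lemma lin_map_zero:
  assumes f: "lin_map A X Y f" shows "f (mzero X) = mzero Y"
proof -
  note D = lin_mapD[OF f]
  have "f (madd X (mzero X) (mzero X)) = madd Y (f (mzero X)) (f (mzero X))"
    using D(1) by (intro D(4)) auto
  then show ?thesis using D rm_self_add[OF D(2), of "f (mzero X)"] by simp
qed

lemma lin_map_neg:
  assumes f: "lin_map A X Y f" and x: "x \<in> mcarrier X" shows "f (mneg X x) = mneg Y (f x)"
proof -
  note D = lin_mapD[OF f]
  have "madd Y (f (mneg X x)) (f x) = mzero Y"
    using D x by (simp add: D(4)[symmetric] lin_map_zero[OF f])
  then show ?thesis using D x by (simp add: rm_add_eq0)
qed

lemma lin_map_sub:
  assumes f: "lin_map A X Y f" and x: "x \<in> mcarrier X" and y: "y \<in> mcarrier X"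
  shows "f (msub X x y) = msub Y (f x) (f y)"
  using lin_mapD[OF f] x y by (simp add: msub_def lin_map_neg[OF f])

lemma lin_mapI:
  assumes "right_module A X" "right_module A Y"
    "\<And>x. x \<in> mcarrier X \<Longrightarrow> f x \<in> mcarrier Y"
    "\<And>x y. x \<in> mcarrier X \<Longrightarrow> y \<in> mcarrier X \<Longrightarrow> f (madd X x y) = madd Y (f x) (f y)"
    "\<And>x r. x \<in> mcarrier X \<Longrightarrow> r \<in> carrier A \<Longrightarrow> f (mact X x r) = mact Y (f x) r"
  shows "lin_map A X Y f"
  using assms by (auto simp: lin_map_def)

lemma lin_map_comp:
  assumes "lin_map A X Y f" "lin_map A Y Z g" shows "lin_map A X Z (\<lambda>x. g (f x))"
  using lin_mapD[OF assms(1)] lin_mapD[OF assms(2)] by (intro lin_mapI) auto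

lemma lin_map_id: "right_module A X \<Longrightarrow> lin_map A X X (\<lambda>x. x)"
  by (intro lin_mapI) auto

lemma lin_map_diff:
  assumes f: "lin_map A X Y f" and g: "lin_map A X Y g"
  shows "lin_map A X Y (\<lambda>x. msub Y (f x) (g x))"
proof -
  note F = lin_mapD[OF f] and G = lin_mapD[OF g]
  show ?thesis
  proof (intro lin_mapI)
    fix x y assume x: "x \<in> mcarrier X" and y: "y \<in> mcarrier X"
    interpret CG: comm_group "add_group Y" by (rule rm_cg[OF F(2)])
    show "msub Y (f (madd X x y)) (g (madd X x y)) = madd Y (msub Y (f x) (g x)) (msub Y (f y) (g y))"
      using x y F G 
      by (simp add: msub_def rm_neg_add[OF F(2)] rm_assoc[OF F(2)] rm_lcomm[OF F(2)])
  next
    fix x r assume x: "x \<in> mcarrier X" and r: "r \<in> carrier A"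
    show "msub Y (f (mact X x r)) (g (mact X x r)) = mact Y (msub Y (f x) (g x)) r"
      using x r F G by (simp add: rm_sub_act)
  qed (use F G in auto)
qed

lemma mker_iff: "x \<in> mker X Y f \<longleftrightarrow> x \<in> mcarrier X \<and> f x = mzero Y"
  by (simp add: mker_def)

section \<open>Finite sums in modules\<close>

context
  fixes A :: "('r,'a) ring_scheme" and X :: "('r,'m) rmod"
  assumes rm: "right_module A X"
begin

interpretation G: comm_group "add_group X" by (rule rm_cg[OF rm])
interpretation A: ring A by (rule rm_ring[OF rm])
lemmas rmS[simp] = rm_zero[OF rm] rm_add[OF rm] rm_act[OF rm] rm_zl[OF rm] rm_zr[OF rm] rm_neg[OF rm]
  rm_negl[OF rm] rm_negr[OF rm] rm_sub[OF rm] rm_act_zero[OF rm] rm_zero_act[OF rm] rm_act_one[OF rm]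

lemma msum_closed[simp]: "(\<And>i. i \<in> F \<Longrightarrow> f i \<in> mcarrier X) \<Longrightarrow> msum X f F \<in> mcarrier X"
  unfolding msum_def using G.finprod_closed[of f F] by auto

lemma msum_empty[simp]: "msum X f {} = mzero X"
  unfolding msum_def by simp

lemma msum_insert: "finite F \<Longrightarrow> a \<notin> F \<Longrightarrow> (\<And>i. i \<in> insert a F \<Longrightarrow> f i \<in> mcarrier X) \<Longrightarrow>
   msum X f (insert a F) = madd X (f a) (msum X f F)"
  unfolding msum_def using G.finprod_insert[of F a f] by auto

lemma msum_single: "f a \<in> mcarrier X \<Longrightarrow> msum X f {a} = f a"
  using msum_insert[of "{}" a f] by simp

lemma msum_cong: "F = F' \<Longrightarrow> (\<And>i. i \<in> F' \<Longrightarrow> g i \<in> mcarrier X) \<Longrightarrow> (\<And>i. i \<in> F' \<Longrightarrow> f i = g i) \<Longrightarrow>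
   msum X f F = msum X g F'"
  unfolding msum_def by (rule G.finprod_cong') auto

lemma msum_zero: "(\<And>i. i \<in> F \<Longrightarrow> f i = mzero X) \<Longrightarrow> msum X f F = mzero X"
  unfolding msum_def using G.finprod_one_eqI[of F f] by simp

lemma msum_neutral: "finite F' \<Longrightarrow> F \<subseteq> F' \<Longrightarrow> (\<And>i. i \<in> F' - F \<Longrightarrow> f i = mzero X) \<Longrightarrow>
   (\<And>i. i \<in> F' \<Longrightarrow> f i \<in> mcarrier X) \<Longrightarrow> msum X f F = msum X f F'"
  unfolding msum_def by (rule G.finprod_mono_neutral_cong_left) auto

lemma msum_add: "(\<And>i. i \<in> F \<Longrightarrow> f i \<in> mcarrier X) \<Longrightarrow> (\<And>i. i \<in> F \<Longrightarrow> g i \<in> mcarrier X) \<Longrightarrow>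
   msum X (\<lambda>i. madd X (f i) (g i)) F = madd X (msum X f F) (msum X g F)"
  unfolding msum_def using G.finprod_multf[of f F g] by auto

lemma msum_UN:
  assumes "finite I" "\<And>i. i \<in> I \<Longrightarrow> finite (B i)" "pairwise (\<lambda>i j. disjnt (B i) (B j)) I"
    "\<And>i x. i \<in> I \<Longrightarrow> x \<in> B i \<Longrightarrow> g x \<in> mcarrier X"
  shows "msum X g (\<Union>(B ` I)) = msum X (\<lambda>i. msum X g (B i)) I"
  unfolding msum_def using G.finprod_UN_disjoint[of I B g] assms by simp

lemma msum_reindex: "inj_on h F \<Longrightarrow> (\<And>i. i \<in> h ` F \<Longrightarrow> f i \<in> mcarrier X) \<Longrightarrow>
  msum X f (h ` F) = msum X (\<lambda>i. f (h i)) F"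
  unfolding msum_def using G.finprod_reindex[of f h F] by auto

lemma msum_act:
  assumes a: "a \<in> carrier A" and f: "\<And>i. i \<in> F \<Longrightarrow> f i \<in> mcarrier X"
  shows "mact X (msum X f F) a = msum X (\<lambda>i. mact X (f i) a) F"
  using f
proof (induct F rule: infinite_finite_induct)
  case (infinite F) then show ?case using a
    by (simp add: msum_def)
next
  case empty then show ?case using a rm by simp
next
  case (insert x F)
  have e1: "msum X f (insert x F) = madd X (f x) (msum X f F)"
    by (rule msum_insert) (use insert in auto)
  have e2: "msum X (\<lambda>i. mact X (f i) a) (insert x F) = madd X (mact X (f x) a) (msum X (\<lambda>i. mact X (f i) a) F)"
    by (rule msum_insert) (use insert a in auto)
  show ?case unfolding e1 e2 using insert a by (simp add: rm_add_act[OF rm])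
qed

lemma msum_finsum:
  assumes x: "x \<in> mcarrier X" and g: "\<And>i. i \<in> F \<Longrightarrow> g i \<in> carrier A"
  shows "mact X x (finsum A g F) = msum X (\<lambda>i. mact X x (g i)) F"
  using g
proof (induct F rule: infinite_finite_induct)
  case (infinite F) then show ?case using x rm
    by (simp add: msum_def finprod_def A.finsum_infinite)
next
  case empty then show ?case using x rm by simp
next
  case (insert y F)
  then have "finsum A g (insert y F) = g y \<oplus>\<^bsub>A\<^esub> finsum A g F"
    by (intro A.finsum_insert) auto
  have e2: "msum X (\<lambda>i. mact X x (g i)) (insert y F) = madd X (mact X x (g y)) (msum X (\<lambda>i. mact X x (g i)) F)"
    by (rule msum_insert) (use insert x in auto)
  show ?case unfolding e2 \<open>finsum A g (insert y F) = _\<close> using insert x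
    by (simp add: rm_act_add[OF rm] A.finsum_closed Pi_def)
qed

end

lemma msum_lin:
  assumes h: "lin_map A X Y h" and f: "\<And>i. i \<in> F \<Longrightarrow> f i \<in> mcarrier X"
  shows "h (msum X f F) = msum Y (\<lambda>i. h (f i)) F"
  using f
proof (induct F rule: infinite_finite_induct)
  case (infinite F) then show ?case using lin_map_zero[OF h]
    by (simp add: msum_def finprod_def)
next
  case empty then show ?case using lin_map_zero[OF h] lin_mapD[OF h] by simp
next
  case (insert x F)
  note D = lin_mapD[OF h]
  have e1: "msum X f (insert x F) = madd X (f x) (msum X f F)"
    by (rule msum_insert[OF D(1)]) (use insert in auto)
  have e2: "msum Y (\<lambda>i. h (f i)) (insert x F) = madd Y (h (f x)) (msum Y (\<lambda>i. h (f i)) F)"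
    by (rule msum_insert[OF D(2)]) (use insert D in auto)
  show ?case unfolding e1 e2 using insert D by (simp add: D(4))
qed

lemma free_simps[simp]:
  "mcarrier (free_rmod A I) = {\<phi>. (\<forall>i. \<phi> i \<in> carrier A) \<and> (\<forall>i. i \<notin> I \<longrightarrow> \<phi> i = \<zero>\<^bsub>A\<^esub>)
                     \<and> finite {i. \<phi> i \<noteq> \<zero>\<^bsub>A\<^esub>}}"
  "mzero (free_rmod A I) = (\<lambda>i. \<zero>\<^bsub>A\<^esub>)"
  "madd (free_rmod A I) = (\<lambda>\<phi> \<psi> i. \<phi> i \<oplus>\<^bsub>A\<^esub> \<psi> i)"
  "mact (free_rmod A I) = (\<lambda>\<phi> r i. \<phi> i \<otimes>\<^bsub>A\<^esub> r)"
  by (simp_all add: free_rmod_def)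

lemma free_right_module:
  assumes A: "ring A" shows "right_module A (free_rmod A I)"
proof -
  interpret A: ring A by (rule A)
  have fin_add: "finite {i. \<phi> i \<oplus>\<^bsub>A\<^esub> \<psi> i \<noteq> \<zero>\<^bsub>A\<^esub>}"
    if "finite {i. \<phi> i \<noteq> \<zero>\<^bsub>A\<^esub>}" "finite {i. \<psi> i \<noteq> \<zero>\<^bsub>A\<^esub>}" "\<forall>i. \<phi> i \<in> carrier A" for \<phi> \<psi>
    by (rule finite_subset[of _ "{i. \<phi> i \<noteq> \<zero>\<^bsub>A\<^esub>} \<union> {i. \<psi> i \<noteq> \<zero>\<^bsub>A\<^esub>}"]) (use that in auto)
  have fin_mult: "finite {i. \<phi> i \<otimes>\<^bsub>A\<^esub> r \<noteq> \<zero>\<^bsub>A\<^esub>}"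
    if "finite {i. \<phi> i \<noteq> \<zero>\<^bsub>A\<^esub>}" "r \<in> carrier A" for \<phi> r
    by (rule finite_subset[of _ "{i. \<phi> i \<noteq> \<zero>\<^bsub>A\<^esub>}"]) (use that in auto)
  have fin_neg: "finite {i. \<ominus>\<^bsub>A\<^esub> \<phi> i \<noteq> \<zero>\<^bsub>A\<^esub>}"
    if "finite {i. \<phi> i \<noteq> \<zero>\<^bsub>A\<^esub>}" "\<forall>i. \<phi> i \<in> carrier A" for \<phi>
    by (rule finite_subset[of _ "{i. \<phi> i \<noteq> \<zero>\<^bsub>A\<^esub>}"]) (use that in auto)
  have cg: "comm_group (add_group (free_rmod A I))"
  proof (rule comm_groupI, goal_cases)
    case (6 x)
    then show ?case
      by (intro bexI[of _ "\<lambda>i. \<ominus>\<^bsub>A\<^esub> x i"]) (auto simp: fin_neg A.l_neg)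
  qed (auto simp: fin_add A.a_ac)
  show ?thesis unfolding right_module_def
    by (auto simp: A cg fin_mult A.r_distr A.l_distr A.m_assoc)
qed

section \<open>Dual bases\<close>

definition dbasis :: "('r,'a) ring_scheme \<Rightarrow> ('r,'m) rmod \<Rightarrow> 'i set \<Rightarrow> ('i \<Rightarrow> 'm) \<Rightarrow> ('i \<Rightarrow> 'm \<Rightarrow> 'r) \<Rightarrow> bool" where
  "dbasis A X I b \<phi> \<longleftrightarrow> (\<forall>i\<in>I. b i \<in> mcarrier X) \<and>
     (\<forall>i\<in>I. \<forall>v\<in>mcarrier X. \<phi> i v \<in> carrier A) \<and>
     (\<forall>i\<in>I. \<forall>v\<in>mcarrier X. \<forall>w\<in>mcarrier X. \<phi> i (madd X v w) = \<phi> i v \<oplus>\<^bsub>A\<^esub> \<phi> i w) \<and>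
     (\<forall>i\<in>I. \<forall>v\<in>mcarrier X. \<forall>a\<in>carrier A. \<phi> i (mact X v a) = \<phi> i v \<otimes>\<^bsub>A\<^esub> a) \<and>
     (\<forall>v\<in>mcarrier X. \<exists>F. finite F \<and> F \<subseteq> I \<and> (\<forall>i\<in>I-F. \<phi> i v = \<zero>\<^bsub>A\<^esub>) \<and>
        v = msum X (\<lambda>i. mact X (b i) (\<phi> i v)) F)"

context
  fixes A :: "('r,'a) ring_scheme" and X :: "('r,'m) rmod" and I :: "'i set"
    and b :: "'i \<Rightarrow> 'm" and \<phi> :: "'i \<Rightarrow> 'm \<Rightarrow> 'r"
  assumes rm: "right_module A X" and db: "dbasis A X I b \<phi>"
begin

interpretation G: comm_group "add_group X" by (rule rm_cg[OF rm])
interpretation A: ring A by (rule rm_ring[OF rm])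
lemmas rmS2[simp] = rm_zero[OF rm] rm_add[OF rm] rm_act[OF rm] rm_zl[OF rm] rm_zr[OF rm] rm_neg[OF rm]
  rm_negl[OF rm] rm_negr[OF rm] rm_sub[OF rm] rm_act_zero[OF rm] rm_zero_act[OF rm] rm_act_one[OF rm]

lemma db_b: "i \<in> I \<Longrightarrow> b i \<in> mcarrier X" using db by (simp add: dbasis_def)
lemma db_phi: "i \<in> I \<Longrightarrow> v \<in> mcarrier X \<Longrightarrow> \<phi> i v \<in> carrier A" using db by (simp add: dbasis_def)
lemma db_add: "i \<in> I \<Longrightarrow> v \<in> mcarrier X \<Longrightarrow> w \<in> mcarrier X \<Longrightarrow> \<phi> i (madd X v w) = \<phi> i v \<oplus>\<^bsub>A\<^esub> \<phi> i w"
  using db by (simp add: dbasis_def)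
lemma db_act: "i \<in> I \<Longrightarrow> v \<in> mcarrier X \<Longrightarrow> a \<in> carrier A \<Longrightarrow> \<phi> i (mact X v a) = \<phi> i v \<otimes>\<^bsub>A\<^esub> a"
  using db by (simp add: dbasis_def)

definition "dsup v = {i\<in>I. \<phi> i v \<noteq> \<zero>\<^bsub>A\<^esub>}"

lemma db_rep: assumes v: "v \<in> mcarrier X"
  shows "finite (dsup v)" "v = msum X (\<lambda>i. mact X (b i) (\<phi> i v)) (dsup v)"
proof -
  obtain F where F: "finite F" "F \<subseteq> I" "\<forall>i\<in>I-F. \<phi> i v = \<zero>\<^bsub>A\<^esub>"
    "v = msum X (\<lambda>i. mact X (b i) (\<phi> i v)) F"
    using db v unfolding dbasis_def by blast
  have sub: "dsup v \<subseteq> F" using F by (auto simp: dsup_def)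
  then show "finite (dsup v)" using F finite_subset by blast
  have "msum X (\<lambda>i. mact X (b i) (\<phi> i v)) (dsup v) = msum X (\<lambda>i. mact X (b i) (\<phi> i v)) F"
    by (rule msum_neutral[OF rm F(1) sub]) (use F v rm in \<open>auto simp: dsup_def db_b db_phi\<close>)
  then show "v = msum X (\<lambda>i. mact X (b i) (\<phi> i v)) (dsup v)" using F by simp
qed

definition "dcoef v p = finsum A (\<lambda>i. \<phi> i v) {i \<in> dsup v. b i = p}"

lemma dcoef_ext:
  assumes v: "v \<in> mcarrier X" and U: "finite U" "dsup v \<subseteq> U" "U \<subseteq> I"
  shows "dcoef v p = finsum A (\<lambda>i. \<phi> i v) {i \<in> U. b i = p}"
  unfolding dcoef_def
  by (rule A.add.finprod_mono_neutral_cong_left) (use U v in \<open>auto simp: dsup_def db_phi\<close>)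

lemma dcoef_closed: "v \<in> mcarrier X \<Longrightarrow> dcoef v p \<in> carrier A"
  unfolding dcoef_def by (rule A.finsum_closed) (auto simp: dsup_def db_phi)

lemma dcoef_zero: "v \<in> mcarrier X \<Longrightarrow> p \<notin> b ` dsup v \<Longrightarrow> dcoef v p = \<zero>\<^bsub>A\<^esub>"
proof -
  assume "p \<notin> b ` dsup v"
  then have e: "{i \<in> dsup v. b i = p} = {}" by auto
  show ?thesis unfolding dcoef_def e by simp
qed

lemma db_projective: "projective A X"
proof -
  let ?F = "free_rmod A (mcarrier X)"
  have sub_add: "dsup (madd X v w) \<subseteq> dsup v \<union> dsup w" if "v \<in> mcarrier X" "w \<in> mcarrier X" for v w
    using that by (auto simp: dsup_def db_add db_phi)
  have sub_act: "dsup (mact X v a) \<subseteq> dsup v" if "v \<in> mcarrier X" "a \<in> carrier A" for v a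
    using that by (auto simp: dsup_def db_act db_phi)
  have dsupI: "dsup v \<subseteq> I" for v by (auto simp: dsup_def)
  have inF: "dcoef v \<in> mcarrier ?F" if v: "v \<in> mcarrier X" for v
  proof -
    have "{p. dcoef v p \<noteq> \<zero>\<^bsub>A\<^esub>} \<subseteq> b ` dsup v" using dcoef_zero[OF v] by blast
    then have "finite {p. dcoef v p \<noteq> \<zero>\<^bsub>A\<^esub>}" using db_rep(1)[OF v] finite_subset by blast
    moreover have "p \<notin> mcarrier X \<Longrightarrow> dcoef v p = \<zero>\<^bsub>A\<^esub>" for p
      using dcoef_zero[OF v, of p] db_b dsupI by blast
    ultimately show ?thesis using dcoef_closed[OF v] by auto
  qed
  have lin: "lin_map A X ?F dcoef"
  proof (rule lin_mapI[OF rm free_right_module[OF A.ring_axioms]])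
    fix v assume "v \<in> mcarrier X" then show "dcoef v \<in> mcarrier ?F" by (rule inF)
  next
    fix v w assume v: "v \<in> mcarrier X" and w: "w \<in> mcarrier X"
    let ?U = "dsup v \<union> dsup w"
    have U: "finite ?U" "?U \<subseteq> I" using db_rep(1)[OF v] db_rep(1)[OF w] dsupI by auto
    show "dcoef (madd X v w) = madd ?F (dcoef v) (dcoef w)"
    proof (rule ext)
      fix p
      have "dcoef (madd X v w) p = finsum A (\<lambda>i. \<phi> i (madd X v w)) {i \<in> ?U. b i = p}"
        by (rule dcoef_ext) (use U v w sub_add in auto)
      also have "\<dots> = finsum A (\<lambda>i. \<phi> i v \<oplus>\<^bsub>A\<^esub> \<phi> i w) {i \<in> ?U. b i = p}"
        by (rule A.finsum_cong') (use U v w in \<open>auto simp: db_add db_phi\<close>)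
      also have "\<dots> = finsum A (\<lambda>i. \<phi> i v) {i \<in> ?U. b i = p} \<oplus>\<^bsub>A\<^esub> finsum A (\<lambda>i. \<phi> i w) {i \<in> ?U. b i = p}"
        by (rule A.finsum_addf) (use U v w in \<open>auto simp: db_phi\<close>)
      also have "\<dots> = dcoef v p \<oplus>\<^bsub>A\<^esub> dcoef w p"
        using dcoef_ext[OF v U(1) _ U(2), of p] dcoef_ext[OF w U(1) _ U(2), of p] by auto
      finally show "dcoef (madd X v w) p = madd ?F (dcoef v) (dcoef w) p" by simp
    qed
  next
    fix v a assume v: "v \<in> mcarrier X" and a: "a \<in> carrier A"
    show "dcoef (mact X v a) = mact ?F (dcoef v) a"
    proof (rule ext)
      fix p
      have U: "finite (dsup v)" "dsup v \<subseteq> I" using db_rep(1)[OF v] dsupI by auto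
      have "dcoef (mact X v a) p = finsum A (\<lambda>i. \<phi> i (mact X v a)) {i \<in> dsup v. b i = p}"
        by (rule dcoef_ext) (use U v a sub_act rm in auto)
      also have "\<dots> = finsum A (\<lambda>i. \<phi> i v \<otimes>\<^bsub>A\<^esub> a) {i \<in> dsup v. b i = p}"
        by (rule A.finsum_cong') (use U v a in \<open>auto simp: db_act db_phi\<close>)
      also have "\<dots> = dcoef v p \<otimes>\<^bsub>A\<^esub> a"
        unfolding dcoef_def
        by (rule A.finsum_ldistr[symmetric]) (use U v a in \<open>auto simp: db_phi\<close>)
      finally show "dcoef (mact X v a) p = mact ?F (dcoef v) a p" by simp
    qed
  qed
  have rep: "lincomb X (dcoef v) \<zero>\<^bsub>A\<^esub> = v" if v: "v \<in> mcarrier X" for v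
  proof -
    let ?G = "b ` dsup v"
    let ?fib = "\<lambda>p. {i \<in> dsup v. b i = p}"
    have fin: "finite (dsup v)" using db_rep(1)[OF v] .
    have G: "finite ?G" "?G \<subseteq> mcarrier X" using fin db_b dsupI by auto
    have "lincomb X (dcoef v) \<zero>\<^bsub>A\<^esub> = msum X (\<lambda>p. mact X p (dcoef v p)) {p \<in> mcarrier X. dcoef v p \<noteq> \<zero>\<^bsub>A\<^esub>}"
      by (simp add: lincomb_def)
    also have "\<dots> = msum X (\<lambda>p. mact X p (dcoef v p)) ?G"
      by (rule msum_neutral[OF rm G(1)]) (use G v dcoef_zero[OF v] dcoef_closed[OF v] rm in auto)
    also have "\<dots> = msum X (\<lambda>p. msum X (\<lambda>i. mact X (b i) (\<phi> i v)) (?fib p)) ?G"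
    proof (rule msum_cong[OF rm refl])
      fix p assume p: "p \<in> ?G"
      show "msum X (\<lambda>i. mact X (b i) (\<phi> i v)) (?fib p) \<in> mcarrier X"
        using v rm by (auto intro!: msum_closed simp: db_b db_phi dsup_def)
      have "mact X p (dcoef v p) = msum X (\<lambda>i. mact X p (\<phi> i v)) (?fib p)"
        unfolding dcoef_def by (rule msum_finsum[OF rm]) (use p G v in \<open>auto simp: db_phi dsup_def\<close>)
      also have "\<dots> = msum X (\<lambda>i. mact X (b i) (\<phi> i v)) (?fib p)"
        by (rule msum_cong[OF rm refl]) (use v rm in \<open>auto simp: db_b db_phi dsup_def\<close>)
      finally show "mact X p (dcoef v p) = msum X (\<lambda>i. mact X (b i) (\<phi> i v)) (?fib p)" .
    qed
    also have "\<dots> = msum X (\<lambda>i. mact X (b i) (\<phi> i v)) (\<Union>(?fib ` ?G))"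
      by (rule msum_UN[OF rm, symmetric]) (use G fin v rm in \<open>auto simp: pairwise_def disjnt_def db_b db_phi dsup_def intro: finite_subset[OF _ fin]\<close>)
    also have "\<Union>(?fib ` ?G) = dsup v" by auto
    also have "msum X (\<lambda>i. mact X (b i) (\<phi> i v)) (dsup v) = v" using db_rep(2)[OF v] by simp
    finally show ?thesis .
  qed
  show ?thesis unfolding projective_def using rm lin rep by blast
qed

end

lemma projective_dbasis:
  assumes "projective A X"
  obtains \<phi> where "dbasis A X (mcarrier X) (\<lambda>p. p) \<phi>"
proof -
  obtain s where s: "lin_map A X (free_rmod A (mcarrier X)) s"
    "\<And>x. x \<in> mcarrier X \<Longrightarrow> lincomb X (s x) \<zero>\<^bsub>A\<^esub> = x"
    using assms unfolding projective_def by blast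
  note D = lin_mapD[OF s(1)]
  have "dbasis A X (mcarrier X) (\<lambda>p. p) (\<lambda>p v. s v p)"
    unfolding dbasis_def
  proof (intro conjI ballI)
    fix v assume v: "v \<in> mcarrier X"
    let ?F = "{p \<in> mcarrier X. s v p \<noteq> \<zero>\<^bsub>A\<^esub>}"
    have "finite {p. s v p \<noteq> \<zero>\<^bsub>A\<^esub>}" using D(3)[OF v] by simp
    then have "finite ?F" by (rule finite_subset[rotated]) auto
    then show "\<exists>F. finite F \<and> F \<subseteq> mcarrier X \<and> (\<forall>i\<in>mcarrier X - F. s v i = \<zero>\<^bsub>A\<^esub>) \<and>
      v = msum X (\<lambda>i. mact X i (s v i)) F"
      using s(2)[OF v] by (intro exI[of _ ?F]) (auto simp: lincomb_def)
  next
    fix i v assume "v \<in> mcarrier X" then show "s v i \<in> carrier A" using D(3) by auto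
  next
    fix i v w assume "v \<in> mcarrier X" "w \<in> mcarrier X"
    then show "s (madd X v w) i = s v i \<oplus>\<^bsub>A\<^esub> s w i" using D(4) by auto
  next
    fix i v a assume "v \<in> mcarrier X" "a \<in> carrier A"
    then show "s (mact X v a) i = s v i \<otimes>\<^bsub>A\<^esub> a" using D(5) by auto
  qed auto
  then show ?thesis by (rule that)
qed

lemma projective_rm: "projective A X \<Longrightarrow> right_module A X"
  by (simp add: projective_def)

section \<open>Lifting along surjections\<close>

lemma lift_proj:
  assumes P: "projective A P" and \<beta>: "lin_map A B C \<beta>" and \<phi>: "lin_map A P C \<phi>"
    and sub: "\<And>x. x \<in> mcarrier P \<Longrightarrow> \<phi> x \<in> \<beta> ` mcarrier B"
  obtains \<psi> where "lin_map A P B \<psi>" "\<And>x. x \<in> mcarrier P \<Longrightarrow> \<beta> (\<psi> x) = \<phi> x"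
proof -
  have rmP: "right_module A P" using P by (rule projective_rm)
  note DB = lin_mapD[OF \<beta>] and DF = lin_mapD[OF \<phi>]
  have rmB: "right_module A B" using DB(1) .
  have rmC: "right_module A C" using DB(2) .
  interpret A: ring A by (rule rm_ring[OF rmP])
  obtain c where db: "dbasis A P (mcarrier P) (\<lambda>p. p) c" using projective_dbasis[OF P] by blast
  define bb where "bb p = (SOME y. y \<in> mcarrier B \<and> \<beta> y = \<phi> p)" for p
  have bb: "bb p \<in> mcarrier B" "\<beta> (bb p) = \<phi> p" if p: "p \<in> mcarrier P" for p
  proof -
    have "\<exists>y. y \<in> mcarrier B \<and> \<beta> y = \<phi> p" using sub[OF p] by (simp add: image_iff Bex_def eq_commute)
    then have "bb p \<in> mcarrier B \<and> \<beta> (bb p) = \<phi> p" unfolding bb_def by (rule someI_ex)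
    then show "bb p \<in> mcarrier B" "\<beta> (bb p) = \<phi> p" by simp_all
  qed
  let ?sup = "\<lambda>x. {p \<in> mcarrier P. c p x \<noteq> \<zero>\<^bsub>A\<^esub>}"
  have supfin: "finite (?sup x)" if "x \<in> mcarrier P" for x
    using db_rep(1)[OF rmP db that] by (simp add: dsup_def[OF rmP db])
  have cc: "c p x \<in> carrier A" if "p \<in> mcarrier P" "x \<in> mcarrier P" for p x
    using db_phi[OF rmP db that] .
  define \<psi> where "\<psi> x = msum B (\<lambda>p. mact B (bb p) (c p x)) (?sup x)" for x
  have ext: "\<psi> x = msum B (\<lambda>p. mact B (bb p) (c p x)) U"
    if x: "x \<in> mcarrier P" and U: "finite U" "?sup x \<subseteq> U" "U \<subseteq> mcarrier P" for x U
    unfolding \<psi>_def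
    by (rule msum_neutral[OF rmB U(1,2)]) (use U x bb cc rmB in \<open>auto simp: rm_act_zero\<close>)
  have lin: "lin_map A P B \<psi>"
  proof (rule lin_mapI[OF rmP rmB])
    fix x assume x: "x \<in> mcarrier P"
    show "\<psi> x \<in> mcarrier B" unfolding \<psi>_def
      by (rule msum_closed[OF rmB]) (use x bb cc rmB in auto)
  next
    fix x y assume x: "x \<in> mcarrier P" and y: "y \<in> mcarrier P"
    let ?U = "?sup x \<union> ?sup y"
    have U: "finite ?U" "?U \<subseteq> mcarrier P" using supfin x y by auto
    have sxy: "?sup (madd P x y) \<subseteq> ?U"
      using x y by (auto simp: db_add[OF rmP db] cc)
    have "\<psi> (madd P x y) = msum B (\<lambda>p. mact B (bb p) (c p (madd P x y))) ?U"
      by (rule ext) (use x y rmP U sxy in auto)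
    also have "\<dots> = msum B (\<lambda>p. madd B (mact B (bb p) (c p x)) (mact B (bb p) (c p y))) ?U"
      by (rule msum_cong[OF rmB refl]) (use x y U bb cc rmB in \<open>auto simp: db_add[OF rmP db] rm_act_add\<close>)
    also have "\<dots> = madd B (msum B (\<lambda>p. mact B (bb p) (c p x)) ?U) (msum B (\<lambda>p. mact B (bb p) (c p y)) ?U)"
      by (rule msum_add[OF rmB]) (use x y U bb cc rmB in auto)
    also have "\<dots> = madd B (\<psi> x) (\<psi> y)"
      using ext[OF x U(1) _ U(2)] ext[OF y U(1) _ U(2)] by auto
    finally show "\<psi> (madd P x y) = madd B (\<psi> x) (\<psi> y)" .
  next
    fix x a assume x: "x \<in> mcarrier P" and a: "a \<in> carrier A"
    have U: "finite (?sup x)" "?sup x \<subseteq> mcarrier P" using supfin x by auto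
    have sxa: "?sup (mact P x a) \<subseteq> ?sup x"
      using x a by (auto simp: db_act[OF rmP db] cc)
    have "\<psi> (mact P x a) = msum B (\<lambda>p. mact B (bb p) (c p (mact P x a))) (?sup x)"
      by (rule ext) (use x a rmP U sxa in auto)
    also have "\<dots> = msum B (\<lambda>p. mact B (mact B (bb p) (c p x)) a) (?sup x)"
      by (rule msum_cong[OF rmB refl]) (use x a U bb cc rmB in \<open>auto simp: db_act[OF rmP db] rm_act_mult\<close>)
    also have "\<dots> = mact B (\<psi> x) a" unfolding \<psi>_def
      by (rule msum_act[OF rmB, symmetric]) (use x a U bb cc rmB in auto)
    finally show "\<psi> (mact P x a) = mact B (\<psi> x) a" .
  qed
  have comm: "\<beta> (\<psi> x) = \<phi> x" if x: "x \<in> mcarrier P" for x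
  proof -
    have "\<beta> (\<psi> x) = msum C (\<lambda>p. \<beta> (mact B (bb p) (c p x))) (?sup x)" unfolding \<psi>_def
      by (rule msum_lin[OF \<beta>]) (use x bb cc rmB in auto)
    also have "\<dots> = msum C (\<lambda>p. \<phi> (mact P p (c p x))) (?sup x)"
      by (rule msum_cong[OF rmC refl]) (use x bb cc rmB rmP DB DF in auto)
    also have "\<dots> = \<phi> (msum P (\<lambda>p. mact P p (c p x)) (?sup x))"
      by (rule msum_lin[OF \<phi>, symmetric]) (use x cc rmP in auto)
    also have "msum P (\<lambda>p. mact P p (c p x)) (?sup x) = x"
      using db_rep(2)[OF rmP db x] by (simp add: dsup_def[OF rmP db])
    finally show ?thesis .
  qed
  show ?thesis by (rule that[OF lin comm])
qed

section \<open>Resolutions\<close>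

definition is_res :: "('r, 'a) ring_scheme \<Rightarrow> ('r, 'm) rmod \<Rightarrow> nat \<Rightarrow> (nat \<Rightarrow> ('r, 'q) rmod)
   \<Rightarrow> (nat \<Rightarrow> 'q \<Rightarrow> 'q) \<Rightarrow> ('q \<Rightarrow> 'm) \<Rightarrow> bool" where
  "is_res R M n P d \<epsilon> \<longleftrightarrow>
        (\<forall>k\<le>n. projective R (P k)) \<and>
        lin_map R (P 0) M \<epsilon> \<and> \<epsilon> ` mcarrier (P 0) = mcarrier M \<and>
        (\<forall>k<n. lin_map R (P (Suc k)) (P k) (d k)) \<and>
        mker (P 0) M \<epsilon> = (if n = 0 then {mzero (P 0)} else d 0 ` mcarrier (P 1)) \<and>
        (\<forall>k<n. mker (P (Suc k)) (P k) (d k) =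
                 (if Suc k < n then d (Suc k) ` mcarrier (P (Suc (Suc k)))
                  else {mzero (P (Suc k))}))"

lemma pdim_le_iff: fixes R :: "('r,'a) ring_scheme" and M :: "('r,'m) rmod" shows "pdim_le R M n \<longleftrightarrow>
  (\<exists>(P :: nat \<Rightarrow> ('r, ('m \<times> 'r \<times> nat) \<Rightarrow> 'r) rmod) d \<epsilon>. is_res R M n P d \<epsilon>)"
  by (simp only: pdim_le_def is_res_def)

context
  fixes A :: "('r,'a) ring_scheme" and X :: "('r,'m) rmod" and n :: nat
    and P :: "nat \<Rightarrow> ('r,'q) rmod" and d :: "nat \<Rightarrow> 'q \<Rightarrow> 'q" and e :: "'q \<Rightarrow> 'm"
  assumes res: "is_res A X n P d e"
begin

lemma res_proj: "j \<le> n \<Longrightarrow> projective A (P j)" using res by (simp add: is_res_def)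
lemma res_e: "lin_map A (P 0) X e" using res by (simp add: is_res_def)
lemma res_e_onto: "e ` mcarrier (P 0) = mcarrier X" using res by (simp add: is_res_def)
lemma res_d: "j < n \<Longrightarrow> lin_map A (P (Suc j)) (P j) (d j)" using res by (simp add: is_res_def)
lemma res_ker0: "mker (P 0) X e = (if n = 0 then {mzero (P 0)} else d 0 ` mcarrier (P 1))"
  using res by (simp add: is_res_def)
lemma res_ker: "j < n \<Longrightarrow> mker (P (Suc j)) (P j) (d j) =
   (if Suc j < n then d (Suc j) ` mcarrier (P (Suc (Suc j))) else {mzero (P (Suc j))})"
  using res by (simp add: is_res_def)
lemma res_comp0: assumes "0 < n" "x \<in> mcarrier (P 1)" shows "e (d 0 x) = mzero X"
proof -
  have "d 0 x \<in> mker (P 0) X e" using res_ker0 assms by simp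
  then show ?thesis by (simp add: mker_def)
qed
lemma res_comp: assumes "Suc (Suc j) \<le> n" "x \<in> mcarrier (P (Suc (Suc j)))"
  shows "d j (d (Suc j) x) = mzero (P j)"
proof -
  have "d (Suc j) x \<in> mker (P (Suc j)) (P j) (d j)" using res_ker[of j] assms by simp
  then show ?thesis by (simp add: mker_def)
qed

end

section \<open>Comparison of resolutions\<close>

lemma chain_map:
  assumes Pp: "\<forall>j\<le>k. projective A (P j)"
  and eP: "lin_map A (P 0) X eP"
  and dP: "\<forall>j<k. lin_map A (P (Suc j)) (P j) (dP j)"
  and c0: "0 < k \<longrightarrow> (\<forall>x\<in>mcarrier (P 1). eP (dP 0 x) = mzero X)"
  and c1: "\<forall>j. Suc (Suc j) \<le> k \<longrightarrow> (\<forall>x\<in>mcarrier (P (Suc (Suc j))). dP j (dP (Suc j) x) = mzero (P j))"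
  and eQ: "lin_map A (Q 0) X eQ" and eQo: "mcarrier X \<subseteq> eQ ` mcarrier (Q 0)"
  and dQ: "\<forall>j<k. lin_map A (Q (Suc j)) (Q j) (dQ j)"
  and x0: "0 < k \<longrightarrow> mker (Q 0) X eQ \<subseteq> dQ 0 ` mcarrier (Q 1)"
  and x1: "\<forall>j. Suc j < k \<longrightarrow> mker (Q (Suc j)) (Q j) (dQ j) \<subseteq> dQ (Suc j) ` mcarrier (Q (Suc (Suc j)))"
  shows "\<exists>f. (\<forall>j\<le>k. lin_map A (P j) (Q j) (f j)) \<and> (\<forall>x\<in>mcarrier (P 0). eQ (f 0 x) = eP x) \<and>
     (\<forall>j<k. \<forall>x\<in>mcarrier (P (Suc j)). dQ j (f (Suc j) x) = f j (dP j x))"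
proof -
  have "\<forall>m. m \<le> k \<longrightarrow> (\<exists>f. (\<forall>j\<le>m. lin_map A (P j) (Q j) (f j)) \<and> (\<forall>x\<in>mcarrier (P 0). eQ (f 0 x) = eP x) \<and>
     (\<forall>j<m. \<forall>x\<in>mcarrier (P (Suc j)). dQ j (f (Suc j) x) = f j (dP j x)))"
  proof (intro allI impI)
    fix m assume "m \<le> k"
    then show "\<exists>f. (\<forall>j\<le>m. lin_map A (P j) (Q j) (f j)) \<and> (\<forall>x\<in>mcarrier (P 0). eQ (f 0 x) = eP x) \<and>
     (\<forall>j<m. \<forall>x\<in>mcarrier (P (Suc j)). dQ j (f (Suc j) x) = f j (dP j x))"
    proof (induct m)
      case 0
      obtain \<psi> where \<psi>: "lin_map A (P 0) (Q 0) \<psi>" "\<And>x. x \<in> mcarrier (P 0) \<Longrightarrow> eQ (\<psi> x) = eP x"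
        by (rule lift_proj[OF _ eQ eP]) (use Pp eQo lin_mapD[OF eP] in auto)
      show ?case by (rule exI[of _ "\<lambda>_. \<psi>"]) (use \<psi> in auto)
    next
      case (Suc m)
      then obtain f where f: "\<forall>j\<le>m. lin_map A (P j) (Q j) (f j)" "\<forall>x\<in>mcarrier (P 0). eQ (f 0 x) = eP x"
        "\<forall>j<m. \<forall>x\<in>mcarrier (P (Suc j)). dQ j (f (Suc j) x) = f j (dP j x)" by auto
      have mk: "m < k" using Suc by auto
      have lin\<phi>: "lin_map A (P (Suc m)) (Q m) (\<lambda>x. f m (dP m x))"
        using lin_map_comp dP f(1) mk by blast
      have sub: "f m (dP m x) \<in> dQ m ` mcarrier (Q (Suc m))" if x: "x \<in> mcarrier (P (Suc m))" for x
      proof (cases m)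
        case 0
        have "eQ (f 0 (dP 0 x)) = mzero X" using f(2) c0 mk x 0 lin_mapD[OF dP[rule_format, OF mk]] by auto
        then have "f 0 (dP 0 x) \<in> mker (Q 0) X eQ"
          using lin_mapD[OF f(1)[rule_format, of 0]] lin_mapD[OF dP[rule_format, OF mk]] x 0
          by (auto simp: mker_def)
        then show ?thesis using x0 mk 0 by auto
      next
        case (Suc i)
        have dPi: "lin_map A (P (Suc (Suc i))) (P (Suc i)) (dP (Suc i))" using dP mk Suc by auto
        have "dQ i (f (Suc i) (dP (Suc i) x)) = f i (dP i (dP (Suc i) x))"
          using f(3) Suc x lin_mapD[OF dPi] by auto
        also have "\<dots> = f i (mzero (P i))" using c1 Suc mk x by auto
        also have "\<dots> = mzero (Q i)" using lin_map_zero[of A "P i" "Q i" "f i"] f(1) Suc by auto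
        finally have "f (Suc i) (dP (Suc i) x) \<in> mker (Q (Suc i)) (Q i) (dQ i)"
          using lin_mapD[OF f(1)[rule_format, of "Suc i"]] lin_mapD[OF dPi] x Suc
          by (auto simp: mker_def)
        then show ?thesis using x1 mk Suc by auto
      qed
      obtain \<psi> where \<psi>: "lin_map A (P (Suc m)) (Q (Suc m)) \<psi>"
        "\<And>x. x \<in> mcarrier (P (Suc m)) \<Longrightarrow> dQ m (\<psi> x) = f m (dP m x)"
        by (rule lift_proj[OF _ _ lin\<phi>]) (use Pp Suc dQ mk sub in auto)
      show ?case
      proof (rule exI[of _ "f(Suc m := \<psi>)"], intro conjI allI impI ballI)
        fix j assume "j \<le> Suc m" then show "lin_map A (P j) (Q j) ((f(Suc m := \<psi>)) j)"
          using f(1) \<psi>(1) by (cases "j = Suc m") auto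
      next
        fix x assume "x \<in> mcarrier (P 0)" then show "eQ ((f(Suc m := \<psi>)) 0 x) = eP x" using f(2) by auto
      next
        fix j x assume j: "j < Suc m" and x: "x \<in> mcarrier (P (Suc j))"
        show "dQ j ((f(Suc m := \<psi>)) (Suc j) x) = (f(Suc m := \<psi>)) j (dP j x)"
          using f(3) \<psi>(2) j x by (cases "j = m") auto
      qed
    qed
  qed
  then show ?thesis by blast
qed

lemma homotopy:
  assumes Pp: "\<forall>j\<le>k. projective A (P j)"
  and eP: "lin_map A (P 0) X eP"
  and dP: "\<forall>j\<le>k. lin_map A (P (Suc j)) (P j) (dP j)"
  and c1: "\<forall>j. Suc (Suc j) \<le> k \<longrightarrow> (\<forall>x\<in>mcarrier (P (Suc (Suc j))). dP j (dP (Suc j) x) = mzero (P j))"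
  and x0: "mker (P 0) X eP \<subseteq> dP 0 ` mcarrier (P 1)"
  and x1: "\<forall>j<k. mker (P (Suc j)) (P j) (dP j) \<subseteq> dP (Suc j) ` mcarrier (P (Suc (Suc j)))"
  and \<phi>: "\<forall>j\<le>k. lin_map A (P j) (P j) (\<phi> j)"
  and \<phi>0: "\<forall>x\<in>mcarrier (P 0). eP (\<phi> 0 x) = mzero X"
  and \<phi>1: "\<forall>j<k. \<forall>x\<in>mcarrier (P (Suc j)). dP j (\<phi> (Suc j) x) = \<phi> j (dP j x)"
  shows "\<exists>h. (\<forall>j\<le>k. lin_map A (P j) (P (Suc j)) (h j)) \<and> (\<forall>x\<in>mcarrier (P 0). dP 0 (h 0 x) = \<phi> 0 x) \<and>
     (\<forall>j<k. \<forall>x\<in>mcarrier (P (Suc j)). dP (Suc j) (h (Suc j) x) = msub (P (Suc j)) (\<phi> (Suc j) x) (h j (dP j x)))"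
proof -
  have "\<forall>m. m \<le> k \<longrightarrow> (\<exists>h. (\<forall>j\<le>m. lin_map A (P j) (P (Suc j)) (h j)) \<and> (\<forall>x\<in>mcarrier (P 0). dP 0 (h 0 x) = \<phi> 0 x) \<and>
     (\<forall>j<m. \<forall>x\<in>mcarrier (P (Suc j)). dP (Suc j) (h (Suc j) x) = msub (P (Suc j)) (\<phi> (Suc j) x) (h j (dP j x))))"
  proof (intro allI impI)
    fix m assume "m \<le> k"
    then show "\<exists>h. (\<forall>j\<le>m. lin_map A (P j) (P (Suc j)) (h j)) \<and> (\<forall>x\<in>mcarrier (P 0). dP 0 (h 0 x) = \<phi> 0 x) \<and>
     (\<forall>j<m. \<forall>x\<in>mcarrier (P (Suc j)). dP (Suc j) (h (Suc j) x) = msub (P (Suc j)) (\<phi> (Suc j) x) (h j (dP j x)))"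
    proof (induct m)
      case 0
      have sub: "\<phi> 0 x \<in> dP 0 ` mcarrier (P 1)" if "x \<in> mcarrier (P 0)" for x
        using x0 \<phi>0 that lin_mapD[OF \<phi>[rule_format, of 0]] by (auto simp: mker_def)
      obtain \<psi> where \<psi>: "lin_map A (P 0) (P 1) \<psi>" "\<And>x. x \<in> mcarrier (P 0) \<Longrightarrow> dP 0 (\<psi> x) = \<phi> 0 x"
        by (rule lift_proj[of A "P 0" "P 1" "P 0" "dP 0" "\<phi> 0"]) (use Pp dP \<phi> sub in auto)
      show ?case by (rule exI[of _ "\<lambda>_. \<psi>"]) (use \<psi> in auto)
    next
      case (Suc m)
      then obtain h where h: "\<forall>j\<le>m. lin_map A (P j) (P (Suc j)) (h j)" "\<forall>x\<in>mcarrier (P 0). dP 0 (h 0 x) = \<phi> 0 x"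
        "\<forall>j<m. \<forall>x\<in>mcarrier (P (Suc j)). dP (Suc j) (h (Suc j) x) = msub (P (Suc j)) (\<phi> (Suc j) x) (h j (dP j x))"
        by auto
      have mk: "m < k" using Suc by auto
      have dPm: "lin_map A (P (Suc m)) (P m) (dP m)" using dP mk by auto
      have hm: "lin_map A (P m) (P (Suc m)) (h m)" using h by auto
      have \<phi>S: "lin_map A (P (Suc m)) (P (Suc m)) (\<phi> (Suc m))" using \<phi> mk by auto
      have rmS: "right_module A (P (Suc m))" using lin_mapD(1)[OF dPm] .
      have rmm: "right_module A (P m)" using lin_mapD(2)[OF dPm] .
      let ?\<psi> = "\<lambda>x. msub (P (Suc m)) (\<phi> (Suc m) x) (h m (dP m x))"
      have lin\<psi>: "lin_map A (P (Suc m)) (P (Suc m)) ?\<psi>"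
        by (rule lin_map_diff[OF \<phi>S lin_map_comp[OF dPm hm]])
      have key: "dP m (h m y) = \<phi> m y" if y: "y \<in> dP m ` mcarrier (P (Suc m))" for y
      proof (cases m)
        case 0 then show ?thesis using h(2) y lin_mapD[OF dPm] by auto
      next
        case (Suc i)
        obtain x where x: "x \<in> mcarrier (P (Suc m))" "y = dP m x" using y by auto
        have yc: "y \<in> mcarrier (P m)" using x lin_mapD[OF dPm] by auto
        have dPi: "lin_map A (P (Suc i)) (P i) (dP i)" using dP mk Suc by auto
        have "dP i y = mzero (P i)" using c1 Suc mk x by auto
        then have "h i (dP i y) = mzero (P (Suc i))" using lin_map_zero[of A "P i" "P (Suc i)" "h i"] h(1) Suc by auto
        then show ?thesis using h(3) Suc yc lin_mapD[OF \<phi>[rule_format, of m]] mk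
          rm_sub_zero[OF rmm] by auto
      qed
      have sub: "?\<psi> x \<in> dP (Suc m) ` mcarrier (P (Suc (Suc m)))" if x: "x \<in> mcarrier (P (Suc m))" for x
      proof -
        have hx: "h m (dP m x) \<in> mcarrier (P (Suc m))" "\<phi> (Suc m) x \<in> mcarrier (P (Suc m))"
          using x lin_mapD[OF dPm] lin_mapD[OF hm] lin_mapD[OF \<phi>S] by auto
        have "dP m (?\<psi> x) = msub (P m) (dP m (\<phi> (Suc m) x)) (dP m (h m (dP m x)))"
          using lin_map_sub[OF dPm hx(2) hx(1)] .
        also have "\<dots> = msub (P m) (\<phi> m (dP m x)) (\<phi> m (dP m x))"
          using key[of "dP m x"] x \<phi>1 mk by auto
        also have "\<dots> = mzero (P m)" using rm_sub_self[OF rmm] lin_mapD[OF \<phi>[rule_format, of m]] x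
          lin_mapD[OF dPm] mk by auto
        finally have "?\<psi> x \<in> mker (P (Suc m)) (P m) (dP m)" using hx rmS by (auto simp: mker_def)
        then show ?thesis using x1 mk by auto
      qed
      obtain \<psi> where \<psi>: "lin_map A (P (Suc m)) (P (Suc (Suc m))) \<psi>"
        "\<And>x. x \<in> mcarrier (P (Suc m)) \<Longrightarrow> dP (Suc m) (\<psi> x) = ?\<psi> x"
        by (rule lift_proj[OF _ _ lin\<psi>]) (use Pp Suc dP sub in auto)
      show ?case
      proof (rule exI[of _ "h(Suc m := \<psi>)"], intro conjI allI impI ballI)
        fix j assume "j \<le> Suc m" then show "lin_map A (P j) (P (Suc j)) ((h(Suc m := \<psi>)) j)"
          using h(1) \<psi>(1) by (cases "j = Suc m") auto
      next
        fix x assume "x \<in> mcarrier (P 0)" then show "dP 0 ((h(Suc m := \<psi>)) 0 x) = \<phi> 0 x" using h(2) by auto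
      next
        fix j x assume j: "j < Suc m" and x: "x \<in> mcarrier (P (Suc j))"
        show "dP (Suc j) ((h(Suc m := \<psi>)) (Suc j) x) = msub (P (Suc j)) (\<phi> (Suc j) x) ((h(Suc m := \<psi>)) j (dP j x))"
          using h(3) \<psi>(2) j x by (cases "j = m") auto
      qed
    qed
  qed
  then show ?thesis by blast
qed


lemma comparison:
  assumes R1: "is_res A X N Q d e" and R2: "is_res A X k Q' d' e'" and kN: "k < N"
  shows "\<exists>\<rho>. lin_map A (Q k) (Q k) \<rho> \<and>
    (\<forall>x\<in>mcarrier (Q k). \<rho> x \<in> (if k = 0 then mker (Q 0) X e else mker (Q k) (Q (k - 1)) (d (k - 1)))) \<and>
    (\<forall>z\<in>(if k = 0 then mker (Q 0) X e else mker (Q k) (Q (k - 1)) (d (k - 1))). \<rho> z = z)"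
proof -
  have N0: "0 < N" using kN by simp
  obtain f where f: "\<forall>j\<le>k. lin_map A (Q j) (Q' j) (f j)" "\<forall>x\<in>mcarrier (Q 0). e' (f 0 x) = e x"
     "\<forall>j<k. \<forall>x\<in>mcarrier (Q (Suc j)). d' j (f (Suc j) x) = f j (d j x)"
  proof -
    have "\<exists>f. (\<forall>j\<le>k. lin_map A (Q j) (Q' j) (f j)) \<and> (\<forall>x\<in>mcarrier (Q 0). e' (f 0 x) = e x) \<and>
     (\<forall>j<k. \<forall>x\<in>mcarrier (Q (Suc j)). d' j (f (Suc j) x) = f j (d j x))"
    proof (rule chain_map)
      show "\<forall>j\<le>k. projective A (Q j)" using res_proj[OF R1] kN by auto
      show "lin_map A (Q 0) X e" using res_e[OF R1] .
      show "\<forall>j<k. lin_map A (Q (Suc j)) (Q j) (d j)" using res_d[OF R1] kN by auto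
      show "0 < k \<longrightarrow> (\<forall>x\<in>mcarrier (Q 1). e (d 0 x) = mzero X)" using res_comp0[OF R1] N0 by auto
      show "\<forall>j. Suc (Suc j) \<le> k \<longrightarrow> (\<forall>x\<in>mcarrier (Q (Suc (Suc j))). d j (d (Suc j) x) = mzero (Q j))"
        using res_comp[OF R1] kN by auto
      show "lin_map A (Q' 0) X e'" using res_e[OF R2] .
      show "mcarrier X \<subseteq> e' ` mcarrier (Q' 0)" using res_e_onto[OF R2] by simp
      show "\<forall>j<k. lin_map A (Q' (Suc j)) (Q' j) (d' j)" using res_d[OF R2] by auto
      show "0 < k \<longrightarrow> mker (Q' 0) X e' \<subseteq> d' 0 ` mcarrier (Q' 1)" using res_ker0[OF R2] by auto
      show "\<forall>j. Suc j < k \<longrightarrow> mker (Q' (Suc j)) (Q' j) (d' j) \<subseteq> d' (Suc j) ` mcarrier (Q' (Suc (Suc j)))"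
        using res_ker[OF R2] by auto
    qed
    then show ?thesis using that by blast
  qed
  obtain g where g: "\<forall>j\<le>k. lin_map A (Q' j) (Q j) (g j)" "\<forall>x\<in>mcarrier (Q' 0). e (g 0 x) = e' x"
     "\<forall>j<k. \<forall>x\<in>mcarrier (Q' (Suc j)). d j (g (Suc j) x) = g j (d' j x)"
  proof -
    have "\<exists>g. (\<forall>j\<le>k. lin_map A (Q' j) (Q j) (g j)) \<and> (\<forall>x\<in>mcarrier (Q' 0). e (g 0 x) = e' x) \<and>
     (\<forall>j<k. \<forall>x\<in>mcarrier (Q' (Suc j)). d j (g (Suc j) x) = g j (d' j x))"
    proof (rule chain_map)
      show "\<forall>j\<le>k. projective A (Q' j)" using res_proj[OF R2] by auto
      show "lin_map A (Q' 0) X e'" using res_e[OF R2] .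
      show "\<forall>j<k. lin_map A (Q' (Suc j)) (Q' j) (d' j)" using res_d[OF R2] by auto
      show "0 < k \<longrightarrow> (\<forall>x\<in>mcarrier (Q' 1). e' (d' 0 x) = mzero X)" using res_comp0[OF R2] by auto
      show "\<forall>j. Suc (Suc j) \<le> k \<longrightarrow> (\<forall>x\<in>mcarrier (Q' (Suc (Suc j))). d' j (d' (Suc j) x) = mzero (Q' j))"
        using res_comp[OF R2] by auto
      show "lin_map A (Q 0) X e" using res_e[OF R1] .
      show "mcarrier X \<subseteq> e ` mcarrier (Q 0)" using res_e_onto[OF R1] by simp
      show "\<forall>j<k. lin_map A (Q (Suc j)) (Q j) (d j)" using res_d[OF R1] kN by auto
      show "0 < k \<longrightarrow> mker (Q 0) X e \<subseteq> d 0 ` mcarrier (Q 1)" using res_ker0[OF R1] N0 by auto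
      show "\<forall>j. Suc j < k \<longrightarrow> mker (Q (Suc j)) (Q j) (d j) \<subseteq> d (Suc j) ` mcarrier (Q (Suc (Suc j)))"
        using res_ker[OF R1] kN by auto
    qed
    then show ?thesis using that by blast
  qed
  define \<phi> where "\<phi> j x = msub (Q j) x (g j (f j x))" for j x
  have rmQ: "right_module A (Q j)" if "j \<le> k" for j using lin_mapD(1)[OF f(1)[rule_format, OF that]] .
  have rmQ': "right_module A (Q' j)" if "j \<le> k" for j using lin_mapD(2)[OF f(1)[rule_format, OF that]] .
  have fc: "f j x \<in> mcarrier (Q' j)" if "j \<le> k" "x \<in> mcarrier (Q j)" for j x
    using lin_mapD(3)[OF f(1)[rule_format, OF that(1)] that(2)] .
  have gc: "g j x \<in> mcarrier (Q j)" if "j \<le> k" "x \<in> mcarrier (Q' j)" for j x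
    using lin_mapD(3)[OF g(1)[rule_format, OF that(1)] that(2)] .
  have dc: "d j x \<in> mcarrier (Q j)" if "j < N" "x \<in> mcarrier (Q (Suc j))" for j x
    using lin_mapD(3)[OF res_d[OF R1 that(1)] that(2)] .
  have \<phi>lin: "\<forall>j\<le>k. lin_map A (Q j) (Q j) (\<phi> j)"
    unfolding \<phi>_def using lin_map_diff[OF lin_map_id lin_map_comp[OF f(1)[rule_format] g(1)[rule_format]]] rmQ
    by blast
  have \<phi>0: "\<forall>x\<in>mcarrier (Q 0). e (\<phi> 0 x) = mzero X"
  proof
    fix x assume x: "x \<in> mcarrier (Q 0)"
    have "e (\<phi> 0 x) = msub X (e x) (e (g 0 (f 0 x)))" unfolding \<phi>_def
      by (rule lin_map_sub[OF res_e[OF R1] x gc[OF _ fc[OF _ x]]]) auto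
    also have "\<dots> = mzero X" using g(2) f(2) fc[OF le0 x] x rm_sub_self[OF lin_mapD(2)[OF res_e[OF R1]]]
      lin_mapD(3)[OF res_e[OF R1]] by auto
    finally show "e (\<phi> 0 x) = mzero X" .
  qed
  have \<phi>1: "\<forall>j<k. \<forall>x\<in>mcarrier (Q (Suc j)). d j (\<phi> (Suc j) x) = \<phi> j (d j x)"
  proof (intro allI impI ballI)
    fix j x assume j: "j < k" and x: "x \<in> mcarrier (Q (Suc j))"
    have jN: "j < N" using j kN by simp
    have "d j (\<phi> (Suc j) x) = msub (Q j) (d j x) (d j (g (Suc j) (f (Suc j) x)))" unfolding \<phi>_def
      by (rule lin_map_sub[OF res_d[OF R1 jN] x gc[OF _ fc[OF _ x]]]) (use j in auto)
    also have "d j (g (Suc j) (f (Suc j) x)) = g j (d' j (f (Suc j) x))"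
      using g(3) j fc[OF _ x] by auto
    also have "d' j (f (Suc j) x) = f j (d j x)" using f(3) j x by auto
    finally show "d j (\<phi> (Suc j) x) = \<phi> j (d j x)" unfolding \<phi>_def .
  qed
  obtain h where h: "\<forall>j\<le>k. lin_map A (Q j) (Q (Suc j)) (h j)" "\<forall>x\<in>mcarrier (Q 0). d 0 (h 0 x) = \<phi> 0 x"
     "\<forall>j<k. \<forall>x\<in>mcarrier (Q (Suc j)). d (Suc j) (h (Suc j) x) = msub (Q (Suc j)) (\<phi> (Suc j) x) (h j (d j x))"
  proof -
    have "\<exists>h. (\<forall>j\<le>k. lin_map A (Q j) (Q (Suc j)) (h j)) \<and> (\<forall>x\<in>mcarrier (Q 0). d 0 (h 0 x) = \<phi> 0 x) \<and>
     (\<forall>j<k. \<forall>x\<in>mcarrier (Q (Suc j)). d (Suc j) (h (Suc j) x) = msub (Q (Suc j)) (\<phi> (Suc j) x) (h j (d j x)))"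
    proof (rule homotopy[OF _ res_e[OF R1] _ _ _ _ \<phi>lin \<phi>0 \<phi>1])
      show "\<forall>j\<le>k. projective A (Q j)" using res_proj[OF R1] kN by auto
      show "\<forall>j\<le>k. lin_map A (Q (Suc j)) (Q j) (d j)" using res_d[OF R1] kN by auto
      show "\<forall>j. Suc (Suc j) \<le> k \<longrightarrow> (\<forall>x\<in>mcarrier (Q (Suc (Suc j))). d j (d (Suc j) x) = mzero (Q j))"
        using res_comp[OF R1] kN by auto
      show "mker (Q 0) X e \<subseteq> d 0 ` mcarrier (Q 1)" using res_ker0[OF R1] N0 by auto
      show "\<forall>j<k. mker (Q (Suc j)) (Q j) (d j) \<subseteq> d (Suc j) ` mcarrier (Q (Suc (Suc j)))"
        using res_ker[OF R1] kN by auto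
    qed
    then show ?thesis using that by blast
  qed
  have hc: "h j x \<in> mcarrier (Q (Suc j))" if "j \<le> k" "x \<in> mcarrier (Q j)" for j x
    using lin_mapD(3)[OF h(1)[rule_format, OF that(1)] that(2)] .
  define \<rho> where "\<rho> x = d k (h k x)" for x
  have \<rho>lin: "lin_map A (Q k) (Q k) \<rho>" unfolding \<rho>_def
    using lin_map_comp[OF h(1)[rule_format, of k] res_d[OF R1 kN]] by simp
  show ?thesis
  proof (intro exI[of _ \<rho>] conjI ballI \<rho>lin)
    fix x assume x: "x \<in> mcarrier (Q k)"
    show "\<rho> x \<in> (if k = 0 then mker (Q 0) X e else mker (Q k) (Q (k - 1)) (d (k - 1)))"
    proof (cases k)
      case 0
      have x0: "x \<in> mcarrier (Q 0)" using x 0 by simp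
      have hx: "h 0 x \<in> mcarrier (Q 1)" using hc[of 0 x] x0 by simp
      have hx': "h 0 x \<in> mcarrier (Q (Suc 0))" using hx by simp
      show ?thesis using res_comp0[OF R1 N0 hx] dc[OF N0 hx'] 0 by (simp add: \<rho>_def mker_def)
    next
      case (Suc i)
      have "d i (d (Suc i) (h (Suc i) x)) = mzero (Q i)"
        by (rule res_comp[OF R1]) (use Suc kN hc[OF order.refl x] in auto)
      then show ?thesis using Suc dc[OF kN hc[OF order.refl x]] by (simp add: \<rho>_def mker_def)
    qed
  next
    fix z assume z: "z \<in> (if k = 0 then mker (Q 0) X e else mker (Q k) (Q (k - 1)) (d (k - 1)))"
    show "\<rho> z = z"
    proof (cases k)
      case 0
      then have z0: "z \<in> mcarrier (Q 0)" "e z = mzero X" using z by (auto simp: mker_def)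
      have "f 0 z \<in> mker (Q' 0) X e'" using f(2) z0 fc[of 0 z] by (simp add: mker_def)
      then have "f 0 z = mzero (Q' 0)" using res_ker0[OF R2] 0 by auto
      then have "g 0 (f 0 z) = mzero (Q 0)" using lin_map_zero[OF g(1)[rule_format, of 0]] by simp
      then show ?thesis using h(2) z0 0 rm_sub_zero[OF rmQ[of 0]] by (simp add: \<rho>_def \<phi>_def)
    next
      case (Suc i)
      then have zc: "z \<in> mcarrier (Q (Suc i))" "d i z = mzero (Q i)" using z by (auto simp: mker_def)
      have ik: "i < k" using Suc by simp
      have "d' i (f (Suc i) z) = f i (mzero (Q i))" using f(3) ik zc by auto
      also have "\<dots> = mzero (Q' i)" using lin_map_zero[OF f(1)[rule_format, of i]] ik by simp
      finally have "f (Suc i) z \<in> mker (Q' (Suc i)) (Q' i) (d' i)" using fc[of "Suc i" z] zc Suc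
        by (simp add: mker_def)
      then have fz: "f (Suc i) z = mzero (Q' (Suc i))" using res_ker[OF R2 ik] Suc by auto
      have gz: "g (Suc i) (f (Suc i) z) = mzero (Q (Suc i))"
        unfolding fz using lin_map_zero[OF g(1)[rule_format, of "Suc i"]] Suc by simp
      have hz: "h i (d i z) = mzero (Q (Suc i))"
        unfolding zc(2) using lin_map_zero[OF h(1)[rule_format, of i]] ik by simp
      have "\<rho> z = msub (Q (Suc i)) (\<phi> (Suc i) z) (h i (d i z))" unfolding \<rho>_def using h(3) ik zc Suc by auto
      also have "\<dots> = z" unfolding hz \<phi>_def gz using rm_sub_zero[OF rmQ[of "Suc i"]] zc Suc by simp
      finally show ?thesis .
    qed
  qed
qed

section \<open>Transport of modules along injections\<close>

definition mapm :: "('a \<Rightarrow> 'b) \<Rightarrow> ('r,'a) rmod \<Rightarrow> ('r,'b) rmod" where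
  "mapm e X = \<lparr>mcarrier = e ` mcarrier X, mzero = e (mzero X),
    madd = (\<lambda>a b. e (madd X (inv_into (mcarrier X) e a) (inv_into (mcarrier X) e b))),
    mact = (\<lambda>a r. e (mact X (inv_into (mcarrier X) e a) r))\<rparr>"

definition conjm :: "('r,'a) rmod \<Rightarrow> ('a \<Rightarrow> 'b) \<Rightarrow> ('c \<Rightarrow> 'd) \<Rightarrow> ('a \<Rightarrow> 'c) \<Rightarrow> 'b \<Rightarrow> 'd" where
  "conjm X e e' f a = e' (f (inv_into (mcarrier X) e a))"

context
  fixes e :: "'a \<Rightarrow> 'b" and X :: "('r,'a) rmod"
  assumes inj: "inj_on e (mcarrier X)"
begin

lemma mapm_carrier[simp]: "mcarrier (mapm e X) = e ` mcarrier X" by (simp add: mapm_def)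
lemma mapm_zero[simp]: "mzero (mapm e X) = e (mzero X)" by (simp add: mapm_def)
lemma mapm_inv[simp]: "x \<in> mcarrier X \<Longrightarrow> inv_into (mcarrier X) e (e x) = x"
  using inj by (simp add: inv_into_f_f)
lemma mapm_add[simp]: "x \<in> mcarrier X \<Longrightarrow> y \<in> mcarrier X \<Longrightarrow> madd (mapm e X) (e x) (e y) = e (madd X x y)"
  by (simp add: mapm_def)
lemma mapm_act[simp]: "x \<in> mcarrier X \<Longrightarrow> mact (mapm e X) (e x) r = e (mact X x r)"
  by (simp add: mapm_def)
lemma mapm_eq[simp]: "x \<in> mcarrier X \<Longrightarrow> y \<in> mcarrier X \<Longrightarrow> (e x = e y) = (x = y)"
  using inj by (auto simp: inj_on_def)

lemma mapm_rm: assumes rm: "right_module A X" shows "right_module A (mapm e X)"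
proof -
  have cg: "comm_group (add_group (mapm e X))"
  proof (rule comm_groupI, goal_cases)
    case 1 then show ?case using rm by auto
  next
    case 2 then show ?case using rm by auto
  next
    case 3 then show ?case using rm by (auto simp: rm_assoc)
  next
    case 4 then show ?case using rm by (auto simp: rm_comm)
  next
    case 5 then show ?case using rm by auto
  next
    case (6 x)
    then obtain y where y: "y \<in> mcarrier X" "x = e y" by auto
    show ?case using y rm by (intro bexI[of _ "e (mneg X y)"]) auto
  qed
  show ?thesis using rm unfolding right_module_def[of A "mapm e X"]
    by (auto simp: cg rm_ring rm_act_add rm_add_act rm_act_mult)
qed

lemma mapm_msum:
  assumes rm: "right_module A X" and g: "\<And>i. i \<in> F \<Longrightarrow> g i \<in> mcarrier X"
  shows "msum (mapm e X) (\<lambda>i. e (g i)) F = e (msum X g F)"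
  using g
proof (induct F rule: infinite_finite_induct)
  case (infinite F) then show ?case by (simp add: msum_def finprod_def)
next
  case empty then show ?case using rm mapm_rm[OF rm] by simp
next
  case (insert x F)
  have e1: "msum X g (insert x F) = madd X (g x) (msum X g F)"
    by (rule msum_insert[OF rm]) (use insert in auto)
  have e2: "msum (mapm e X) (\<lambda>i. e (g i)) (insert x F) = madd (mapm e X) (e (g x)) (msum (mapm e X) (\<lambda>i. e (g i)) F)"
    by (rule msum_insert[OF mapm_rm[OF rm]]) (use insert in auto)
  show ?case unfolding e1 e2 using insert rm by simp
qed

lemma mapm_dbasis:
  assumes rm: "right_module A X" and db: "dbasis A X I b \<phi>"
  shows "dbasis A (mapm e X) I (\<lambda>i. e (b i)) (\<lambda>i w. \<phi> i (inv_into (mcarrier X) e w))"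
  unfolding dbasis_def
proof (intro conjI ballI)
  fix v assume "v \<in> mcarrier (mapm e X)"
  then obtain x where x: "x \<in> mcarrier X" "v = e x" by auto
  obtain F where F: "finite F" "F \<subseteq> I" "\<forall>i\<in>I-F. \<phi> i x = \<zero>\<^bsub>A\<^esub>"
    "x = msum X (\<lambda>i. mact X (b i) (\<phi> i x)) F"
    using db x unfolding dbasis_def by blast
  have "msum (mapm e X) (\<lambda>i. mact (mapm e X) (e (b i)) (\<phi> i x)) F = msum (mapm e X) (\<lambda>i. e (mact X (b i) (\<phi> i x))) F"
    by (rule msum_cong[OF mapm_rm[OF rm] refl]) (use F x rm db_b[OF rm db] db_phi[OF rm db] in auto)
  also have "\<dots> = e x"
  proof -
    have "\<And>i. i \<in> F \<Longrightarrow> mact X (b i) (\<phi> i x) \<in> mcarrier X"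
      using F x rm db_b[OF rm db] db_phi[OF rm db] by auto
    from mapm_msum[OF rm, where F=F and g="\<lambda>i. mact X (b i) (\<phi> i x)", OF this]
    show ?thesis using F(4) by simp
  qed
  finally show "\<exists>F. finite F \<and> F \<subseteq> I \<and> (\<forall>i\<in>I - F. \<phi> i (inv_into (mcarrier X) e v) = \<zero>\<^bsub>A\<^esub>) \<and>
      v = msum (mapm e X) (\<lambda>i. mact (mapm e X) (e (b i)) (\<phi> i (inv_into (mcarrier X) e v))) F"
    using F x by (intro exI[of _ F]) auto
qed (use rm db_b[OF rm db] db_phi[OF rm db] db_add[OF rm db] db_act[OF rm db] in auto)

lemma mapm_proj: "projective A X \<Longrightarrow> projective A (mapm e X)"
  using projective_dbasis[of A X] db_projective[OF mapm_rm mapm_dbasis] projective_rm by metis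

end

lemma conj_lin:
  assumes f: "lin_map A X Y f" and i1: "inj_on e (mcarrier X)" and i2: "inj_on e' (mcarrier Y)"
  shows "lin_map A (mapm e X) (mapm e' Y) (conjm X e e' f)"
proof -
  note D = lin_mapD[OF f]
  show ?thesis
    by (rule lin_mapI[OF mapm_rm[OF i1 D(1)] mapm_rm[OF i2 D(2)]])
      (use D i1 i2 in \<open>auto simp: conjm_def\<close>)
qed

lemma conj_apply[simp]: "inj_on e (mcarrier X) \<Longrightarrow> x \<in> mcarrier X \<Longrightarrow> conjm X e e' f (e x) = e' (f x)"
  by (simp add: conjm_def inv_into_f_f)

lemma conj_ker:
  assumes f: "lin_map A X Y f" and i1: "inj_on e (mcarrier X)" and i2: "inj_on e' (mcarrier Y)"
  shows "mker (mapm e X) (mapm e' Y) (conjm X e e' f) = e ` mker X Y f"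
  using lin_mapD[OF f] i1 i2 rm_zero[OF lin_mapD(2)[OF f]]
  by (auto simp: mker_def mapm_eq[OF i2])

lemma conj_img:
  assumes i1: "inj_on e (mcarrier X)"
  shows "conjm X e e' f ` mcarrier (mapm e X) = e' ` f ` mcarrier X"
  using i1 by (force simp: image_iff)

lemma conj_back:
  assumes g: "lin_map A (mapm e X) (mapm e' Y) g" and i1: "inj_on e (mcarrier X)" and i2: "inj_on e' (mcarrier Y)"
    and rX: "right_module A X" and rY: "right_module A Y"
  shows "lin_map A X Y (\<lambda>x. inv_into (mcarrier Y) e' (g (e x)))"
proof -
  note D = lin_mapD[OF g]
  have gc: "\<exists>y\<in>mcarrier Y. g (e x) = e' y" if "x \<in> mcarrier X" for x
    using D(3)[of "e x"] that i1 by (auto simp: mapm_carrier[OF i2])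
  show ?thesis
  proof (rule lin_mapI[OF rX rY])
    fix x assume x: "x \<in> mcarrier X"
    then show "inv_into (mcarrier Y) e' (g (e x)) \<in> mcarrier Y" using gc[OF x] i2 by auto
  next
    fix x y assume x: "x \<in> mcarrier X" and y: "y \<in> mcarrier X"
    obtain u where u: "u \<in> mcarrier Y" "g (e x) = e' u" using gc[OF x] by blast
    obtain w where w: "w \<in> mcarrier Y" "g (e y) = e' w" using gc[OF y] by blast
    have "g (e (madd X x y)) = g (madd (mapm e X) (e x) (e y))" using x y i1 by simp
    also have "\<dots> = madd (mapm e' Y) (g (e x)) (g (e y))" using D(4) x y by (simp add: mapm_carrier[OF i1])
    also have "\<dots> = e' (madd Y u w)" using u w i2 by simp
    finally show "inv_into (mcarrier Y) e' (g (e (madd X x y))) =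
       madd Y (inv_into (mcarrier Y) e' (g (e x))) (inv_into (mcarrier Y) e' (g (e y)))"
      using u w i2 rY by simp
  next
    fix x r assume x: "x \<in> mcarrier X" and r: "r \<in> carrier A"
    obtain u where u: "u \<in> mcarrier Y" "g (e x) = e' u" using gc[OF x] by blast
    have "g (e (mact X x r)) = g (mact (mapm e X) (e x) r)" using x i1 by simp
    also have "\<dots> = mact (mapm e' Y) (g (e x)) r" using D(5) x r by (simp add: mapm_carrier[OF i1])
    also have "\<dots> = e' (mact Y u r)" using u i2 by simp
    finally show "inv_into (mcarrier Y) e' (g (e (mact X x r))) = mact Y (inv_into (mcarrier Y) e' (g (e x))) r"
      using u r i2 rY by simp
  qed
qed

lemma sub_rm:
  assumes rm: "right_module A X" and C: "C \<subseteq> mcarrier X" "mzero X \<in> C"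
    "\<And>x y. x \<in> C \<Longrightarrow> y \<in> C \<Longrightarrow> madd X x y \<in> C"
    "\<And>x r. x \<in> C \<Longrightarrow> r \<in> carrier A \<Longrightarrow> mact X x r \<in> C"
  shows "right_module A (X\<lparr>mcarrier := C\<rparr>)"
proof -
  interpret A: ring A by (rule rm_ring[OF rm])
  have neg: "mneg X x \<in> C" if x: "x \<in> C" for x
  proof -
    have xc: "x \<in> mcarrier X" using x C by auto
    have "mact X x (\<ominus>\<^bsub>A\<^esub> \<one>\<^bsub>A\<^esub>) = mneg X x"
    proof -
      have "madd X (mact X x (\<ominus>\<^bsub>A\<^esub> \<one>\<^bsub>A\<^esub>)) x = mact X x (\<ominus>\<^bsub>A\<^esub> \<one>\<^bsub>A\<^esub> \<oplus>\<^bsub>A\<^esub> \<one>\<^bsub>A\<^esub>)"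
        using xc rm by (simp add: rm_act_add)
      also have "\<dots> = mzero X" using xc rm by (simp add: A.l_neg)
      finally show ?thesis using rm_add_eq0[OF rm] xc rm by simp
    qed
    then show ?thesis using C(4)[OF x, of "\<ominus>\<^bsub>A\<^esub> \<one>\<^bsub>A\<^esub>"] by simp
  qed
  have Cs: "\<And>x. x \<in> C \<Longrightarrow> x \<in> mcarrier X" using C(1) by auto
  have cg: "comm_group (add_group (X\<lparr>mcarrier := C\<rparr>))"
  proof (rule comm_groupI, goal_cases)
    case 1 then show ?case using C by simp
  next
    case 2 then show ?case using C by simp
  next
    case 3 then show ?case using C rm by (auto simp: rm_assoc[OF rm Cs Cs Cs])
  next
    case 4 then show ?case using C rm by (auto simp: rm_comm[OF rm Cs Cs])
  next
    case 5 then show ?case using C rm Cs by auto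
  next
    case (6 x)
    then show ?case using C rm neg Cs by (intro bexI[of _ "mneg X x"]) auto
  qed
  show ?thesis using rm C Cs unfolding right_module_def[of A "X\<lparr>mcarrier := C\<rparr>"]
    by (auto simp: cg rm_ring rm_act_add rm_add_act rm_act_mult)
qed

lemma sub_lin_dom:
  assumes f: "lin_map A X Y f" and rC: "right_module A (X\<lparr>mcarrier := C\<rparr>)" and C: "C \<subseteq> mcarrier X"
  shows "lin_map A (X\<lparr>mcarrier := C\<rparr>) Y f"
proof -
  note D = lin_mapD[OF f]
  have Cs: "\<And>x. x \<in> C \<Longrightarrow> x \<in> mcarrier X" using C by auto
  show ?thesis using D(2) rC by (intro lin_mapI) (auto intro!: D(3,4,5) Cs)
qed

lemma sub_lin_cod:
  assumes f: "lin_map A X Y f" and rC: "right_module A (Y\<lparr>mcarrier := C\<rparr>)" and C: "\<And>x. x \<in> mcarrier X \<Longrightarrow> f x \<in> C"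
  shows "lin_map A X (Y\<lparr>mcarrier := C\<rparr>) f"
  using lin_mapD[OF f] rC C by (intro lin_mapI) auto

definition liftm :: "('r,'q) rmod \<Rightarrow> ('r \<times> 'm \<times> 's, 'q) rmod" where
  "liftm X = \<lparr>mcarrier = mcarrier X, mzero = mzero X, madd = madd X, mact = (\<lambda>x l. mact X x (fst l))\<rparr>"

definition Amod :: "('r,'a) ring_scheme \<Rightarrow> ('r,'r) rmod" where
  "Amod A = \<lparr>mcarrier = carrier A, mzero = \<zero>\<^bsub>A\<^esub>, madd = add A, mact = mult A\<rparr>"

lemma ring_add_cg: assumes A: "ring A"
  shows "comm_group \<lparr>carrier = carrier A, mult = add A, one = \<zero>\<^bsub>A\<^esub>\<rparr>"
proof -
  interpret A: ring A by (rule A)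
  show ?thesis
  proof (rule comm_groupI, goal_cases)
    case (6 x) then show ?case by (intro bexI[of _ "\<ominus>\<^bsub>A\<^esub> x"]) (auto simp: A.l_neg)
  qed (auto simp: A.a_ac)
qed

lemma Amod_rm: assumes A: "ring A" shows "right_module A (Amod A)"
proof -
  interpret A: ring A by (rule A)
  have "add_group (Amod A) = \<lparr>carrier = carrier A, mult = add A, one = \<zero>\<^bsub>A\<^esub>\<rparr>" by (simp add: add_group_def Amod_def)
  then have "comm_group (add_group (Amod A))" using ring_add_cg[OF A] by simp
  then show ?thesis unfolding right_module_def
    by (simp add: Amod_def A A.r_distr A.l_distr A.m_assoc)
qed

locale tri =
  fixes R :: "('r,'a) ring_scheme" and S :: "('s,'b) ring_scheme" and M :: "('r,'m) rmod"
    and L :: "'s \<Rightarrow> 'm \<Rightarrow> 'm"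
  assumes R: "ring R" and S: "ring S" and bm: "bimodule S R M L"
begin

sublocale R: ring R by (rule R)
sublocale S: ring S by (rule S)

lemma rmM: "right_module R M" using bm by (simp add: bimodule_def)

lemmas M_simps[simp] = rm_zero[OF rmM] rm_add[OF rmM] rm_act[OF rmM] rm_zl[OF rmM] rm_zr[OF rmM]
  rm_neg[OF rmM] rm_negl[OF rmM] rm_negr[OF rmM] rm_act_zero[OF rmM] rm_zero_act[OF rmM] rm_act_one[OF rmM]

lemma bm_closed[simp]: "s \<in> carrier S \<Longrightarrow> x \<in> mcarrier M \<Longrightarrow> L s x \<in> mcarrier M"
  using bm by (simp add: bimodule_def)
lemma bm_add_l: "s \<in> carrier S \<Longrightarrow> t \<in> carrier S \<Longrightarrow> x \<in> mcarrier M \<Longrightarrow> L (s \<oplus>\<^bsub>S\<^esub> t) x = madd M (L s x) (L t x)"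
  using bm by (simp add: bimodule_def)
lemma bm_add_r: "s \<in> carrier S \<Longrightarrow> x \<in> mcarrier M \<Longrightarrow> y \<in> mcarrier M \<Longrightarrow> L s (madd M x y) = madd M (L s x) (L s y)"
  using bm by (simp add: bimodule_def)
lemma bm_mult: "s \<in> carrier S \<Longrightarrow> t \<in> carrier S \<Longrightarrow> x \<in> mcarrier M \<Longrightarrow> L (s \<otimes>\<^bsub>S\<^esub> t) x = L s (L t x)"
  using bm by (simp add: bimodule_def)
lemma bm_one[simp]: "x \<in> mcarrier M \<Longrightarrow> L \<one>\<^bsub>S\<^esub> x = x"
  using bm by (simp add: bimodule_def)
lemma bm_compat: "s \<in> carrier S \<Longrightarrow> x \<in> mcarrier M \<Longrightarrow> r \<in> carrier R \<Longrightarrow> mact M (L s x) r = L s (mact M x r)"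
  using bm by (simp add: bimodule_def)
lemma bm_zero_l[simp]: "x \<in> mcarrier M \<Longrightarrow> L \<zero>\<^bsub>S\<^esub> x = mzero M"
proof -
  assume x: "x \<in> mcarrier M"
  have "L \<zero>\<^bsub>S\<^esub> x = madd M (L \<zero>\<^bsub>S\<^esub> x) (L \<zero>\<^bsub>S\<^esub> x)" using bm_add_l[of "\<zero>\<^bsub>S\<^esub>" "\<zero>\<^bsub>S\<^esub>" x] x by simp
  then show ?thesis using rm_self_add[OF rmM, of "L \<zero>\<^bsub>S\<^esub> x"] x by simp
qed
lemma bm_zero_r[simp]: "s \<in> carrier S \<Longrightarrow> L s (mzero M) = mzero M"
proof -
  assume s: "s \<in> carrier S"
  have "L s (mzero M) = madd M (L s (mzero M)) (L s (mzero M))" using bm_add_r[of s "mzero M" "mzero M"] s by simp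
  then show ?thesis using rm_self_add[OF rmM, of "L s (mzero M)"] s by simp
qed

abbreviation "Lam \<equiv> tri_ring R S M L"

lemma tri_carrier: "carrier Lam = carrier R \<times> mcarrier M \<times> carrier S" by (simp add: tri_ring_def)
lemma tri_mem[simp]: "((r,m,s) \<in> carrier Lam) = (r \<in> carrier R \<and> m \<in> mcarrier M \<and> s \<in> carrier S)"
  by (simp add: tri_ring_def)
lemma tri_mult[simp]: "(r,m,s) \<otimes>\<^bsub>Lam\<^esub> (r',m',s') = (r \<otimes>\<^bsub>R\<^esub> r', madd M (mact M m r') (L s m'), s \<otimes>\<^bsub>S\<^esub> s')"
  by (simp add: tri_ring_def)
lemma tri_add[simp]: "(r,m,s) \<oplus>\<^bsub>Lam\<^esub> (r',m',s') = (r \<oplus>\<^bsub>R\<^esub> r', madd M m m', s \<oplus>\<^bsub>S\<^esub> s')"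
  by (simp add: tri_ring_def)
lemma tri_one: "\<one>\<^bsub>Lam\<^esub> = (\<one>\<^bsub>R\<^esub>, mzero M, \<one>\<^bsub>S\<^esub>)" by (simp add: tri_ring_def)
lemma tri_zero: "\<zero>\<^bsub>Lam\<^esub> = (\<zero>\<^bsub>R\<^esub>, mzero M, \<zero>\<^bsub>S\<^esub>)" by (simp add: tri_ring_def)

lemma M4: "a \<in> mcarrier M \<Longrightarrow> b \<in> mcarrier M \<Longrightarrow> c \<in> mcarrier M \<Longrightarrow> d \<in> mcarrier M \<Longrightarrow>
  madd M (madd M a b) (madd M c d) = madd M (madd M a c) (madd M b d)"
  by (simp add: rm_assoc[OF rmM] rm_lcomm[OF rmM, of b c d])

lemma tri_ring: "ring Lam"
proof (rule ringI)
  show "abelian_group Lam"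
  proof (rule abelian_groupI)
    fix x y assume "x \<in> carrier Lam" "y \<in> carrier Lam"
    then show "x \<oplus>\<^bsub>Lam\<^esub> y \<in> carrier Lam"
      by (cases x rule: prod_cases3; cases y rule: prod_cases3) simp
  next
    show "\<zero>\<^bsub>Lam\<^esub> \<in> carrier Lam" by (simp add: tri_zero)
  next
    fix x y z assume "x \<in> carrier Lam" "y \<in> carrier Lam" "z \<in> carrier Lam"
    then show "x \<oplus>\<^bsub>Lam\<^esub> y \<oplus>\<^bsub>Lam\<^esub> z = x \<oplus>\<^bsub>Lam\<^esub> (y \<oplus>\<^bsub>Lam\<^esub> z)"
      by (cases x rule: prod_cases3; cases y rule: prod_cases3; cases z rule: prod_cases3)
        (simp add: R.a_assoc S.a_assoc rm_assoc[OF rmM])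
  next
    fix x y assume "x \<in> carrier Lam" "y \<in> carrier Lam"
    then show "x \<oplus>\<^bsub>Lam\<^esub> y = y \<oplus>\<^bsub>Lam\<^esub> x"
      by (cases x rule: prod_cases3; cases y rule: prod_cases3)
        (simp add: R.a_comm S.a_comm rm_comm[OF rmM])
  next
    fix x assume "x \<in> carrier Lam"
    then show "\<zero>\<^bsub>Lam\<^esub> \<oplus>\<^bsub>Lam\<^esub> x = x"
      by (cases x rule: prod_cases3) (simp add: tri_zero)
  next
    fix x assume "x \<in> carrier Lam"
    then show "\<exists>y\<in>carrier Lam. y \<oplus>\<^bsub>Lam\<^esub> x = \<zero>\<^bsub>Lam\<^esub>"
    proof (cases x rule: prod_cases3)
      case (fields r m s)
      then show ?thesis using \<open>x \<in> carrier Lam\<close>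
        by (intro bexI[of _ "(\<ominus>\<^bsub>R\<^esub> r, mneg M m, \<ominus>\<^bsub>S\<^esub> s)"]) (auto simp: tri_zero R.l_neg S.l_neg)
    qed
  qed
next
  show "monoid Lam"
  proof (rule monoidI)
    fix x y assume "x \<in> carrier Lam" "y \<in> carrier Lam"
    then show "x \<otimes>\<^bsub>Lam\<^esub> y \<in> carrier Lam"
      by (cases x rule: prod_cases3; cases y rule: prod_cases3) simp
  next
    show "\<one>\<^bsub>Lam\<^esub> \<in> carrier Lam" by (simp add: tri_one)
  next
    fix x y z assume "x \<in> carrier Lam" "y \<in> carrier Lam" "z \<in> carrier Lam"
    then show "x \<otimes>\<^bsub>Lam\<^esub> y \<otimes>\<^bsub>Lam\<^esub> z = x \<otimes>\<^bsub>Lam\<^esub> (y \<otimes>\<^bsub>Lam\<^esub> z)"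
      by (cases x rule: prod_cases3; cases y rule: prod_cases3; cases z rule: prod_cases3)
        (simp add: R.m_assoc S.m_assoc rm_assoc[OF rmM] rm_add_act[OF rmM] rm_act_mult[OF rmM]
           bm_add_r bm_mult bm_compat)
  next
    fix x assume "x \<in> carrier Lam"
    then show "\<one>\<^bsub>Lam\<^esub> \<otimes>\<^bsub>Lam\<^esub> x = x"
      by (cases x rule: prod_cases3) (simp add: tri_one)
  next
    fix x assume "x \<in> carrier Lam"
    then show "x \<otimes>\<^bsub>Lam\<^esub> \<one>\<^bsub>Lam\<^esub> = x"
      by (cases x rule: prod_cases3) (simp add: tri_one)
  qed
next
  fix x y z assume "x \<in> carrier Lam" "y \<in> carrier Lam" "z \<in> carrier Lam"
  then show "(x \<oplus>\<^bsub>Lam\<^esub> y) \<otimes>\<^bsub>Lam\<^esub> z = x \<otimes>\<^bsub>Lam\<^esub> z \<oplus>\<^bsub>Lam\<^esub> y \<otimes>\<^bsub>Lam\<^esub> z"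
    by (cases x rule: prod_cases3; cases y rule: prod_cases3; cases z rule: prod_cases3)
      (simp add: R.l_distr S.l_distr rm_add_act[OF rmM] bm_add_l M4)
next
  fix x y z assume "x \<in> carrier Lam" "y \<in> carrier Lam" "z \<in> carrier Lam"
  then show "z \<otimes>\<^bsub>Lam\<^esub> (x \<oplus>\<^bsub>Lam\<^esub> y) = z \<otimes>\<^bsub>Lam\<^esub> x \<oplus>\<^bsub>Lam\<^esub> z \<otimes>\<^bsub>Lam\<^esub> y"
    by (cases x rule: prod_cases3; cases y rule: prod_cases3; cases z rule: prod_cases3)
      (simp add: R.r_distr S.r_distr rm_act_add[OF rmM] bm_add_r M4)
qed

sublocale Lam: ring Lam by (rule tri_ring)

lemma tri_fst_mult: "x \<in> carrier Lam \<Longrightarrow> y \<in> carrier Lam \<Longrightarrow> fst (x \<otimes>\<^bsub>Lam\<^esub> y) = fst x \<otimes>\<^bsub>R\<^esub> fst y"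
  by (cases x rule: prod_cases3; cases y rule: prod_cases3) simp
lemma tri_fst_add: "x \<in> carrier Lam \<Longrightarrow> y \<in> carrier Lam \<Longrightarrow> fst (x \<oplus>\<^bsub>Lam\<^esub> y) = fst x \<oplus>\<^bsub>R\<^esub> fst y"
  by (cases x rule: prod_cases3; cases y rule: prod_cases3) simp
lemma tri_fst_mem: "x \<in> carrier Lam \<Longrightarrow> fst x \<in> carrier R"
  by (cases x rule: prod_cases3) simp
lemma tri_sss_mult: "x \<in> carrier Lam \<Longrightarrow> y \<in> carrier Lam \<Longrightarrow> snd (snd (x \<otimes>\<^bsub>Lam\<^esub> y)) = snd (snd x) \<otimes>\<^bsub>S\<^esub> snd (snd y)"
  by (cases x rule: prod_cases3; cases y rule: prod_cases3) simp
lemma tri_sss_add: "x \<in> carrier Lam \<Longrightarrow> y \<in> carrier Lam \<Longrightarrow> snd (snd (x \<oplus>\<^bsub>Lam\<^esub> y)) = snd (snd x) \<oplus>\<^bsub>S\<^esub> snd (snd y)"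
  by (cases x rule: prod_cases3; cases y rule: prod_cases3) simp
lemma tri_sss_mem: "x \<in> carrier Lam \<Longrightarrow> snd (snd x) \<in> carrier S"
  by (cases x rule: prod_cases3) simp

section \<open>Lifting R-modules to Lambda-modules\<close>

lemma liftm_simps[simp]: "mcarrier (liftm X) = mcarrier X" "mzero (liftm X) = mzero X"
  "madd (liftm X) = madd X" "mact (liftm X) x l = mact X x (fst l)"
  by (simp_all add: liftm_def)

lemma liftm_ag: "add_group (liftm X) = add_group X" by (simp add: add_group_def)
lemma liftm_msum[simp]: "msum (liftm X) f F = msum X f F" by (simp add: msum_def liftm_ag)
lemma liftm_mker[simp]: "mker (liftm X) (liftm Y) f = mker X Y f" by (simp add: mker_def)

lemma liftm_rm: assumes rm: "right_module R X" shows "right_module Lam (liftm X)"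
  using rm tri_ring unfolding right_module_def[of Lam "liftm X"]
  by (auto simp: liftm_ag rm_cg tri_fst_mult tri_fst_add tri_fst_mem tri_one
      rm_act_add[OF rm] rm_add_act[OF rm] rm_act_mult[OF rm])

lemma liftm_lin: assumes f: "lin_map R X Y f" shows "lin_map Lam (liftm X) (liftm Y) f"
  using lin_mapD[OF f] by (intro lin_mapI liftm_rm) (auto simp: tri_fst_mem)

lemma liftm_lin_back:
  assumes f: "lin_map Lam (liftm X) (liftm Y) f" and rX: "right_module R X" and rY: "right_module R Y"
  shows "lin_map R X Y f"
proof (rule lin_mapI[OF rX rY])
  note D = lin_mapD[OF f]
  fix x r assume x: "x \<in> mcarrier X" and r: "r \<in> carrier R"
  have "(r, mzero M, \<zero>\<^bsub>S\<^esub>) \<in> carrier Lam" using r by simp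
  from D(5)[of x, OF _ this] x show "f (mact X x r) = mact Y (f x) r" by simp
qed (use lin_mapD[OF f] in auto)

lemma liftm_dbasis:
  assumes rm: "right_module R X" and db: "dbasis R X I b \<phi>"
  shows "dbasis Lam (liftm X) I b (\<lambda>i v. (\<phi> i v, mzero M, \<zero>\<^bsub>S\<^esub>))"
  unfolding dbasis_def
proof (intro conjI ballI)
  fix v assume v: "v \<in> mcarrier (liftm X)"
  obtain F where F: "finite F" "F \<subseteq> I" "\<forall>i\<in>I-F. \<phi> i v = \<zero>\<^bsub>R\<^esub>"
    "v = msum X (\<lambda>i. mact X (b i) (\<phi> i v)) F"
    using db v unfolding dbasis_def by auto
  show "\<exists>F. finite F \<and> F \<subseteq> I \<and> (\<forall>i\<in>I - F. (\<phi> i v, mzero M, \<zero>\<^bsub>S\<^esub>) = \<zero>\<^bsub>Lam\<^esub>) \<and>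
      v = msum (liftm X) (\<lambda>i. mact (liftm X) (b i) (\<phi> i v, mzero M, \<zero>\<^bsub>S\<^esub>)) F"
    using F by (intro exI[of _ F]) (auto simp: tri_zero)
next
  fix i v w assume i: "i \<in> I" and v: "v \<in> mcarrier (liftm X)" and w: "w \<in> mcarrier (liftm X)"
  show "(\<phi> i (madd (liftm X) v w), mzero M, \<zero>\<^bsub>S\<^esub>) = (\<phi> i v, mzero M, \<zero>\<^bsub>S\<^esub>) \<oplus>\<^bsub>Lam\<^esub> (\<phi> i w, mzero M, \<zero>\<^bsub>S\<^esub>)"
    using i v w db_add[OF rm db] by simp
next
  fix i v a assume i: "i \<in> I" and v: "v \<in> mcarrier (liftm X)" and a: "a \<in> carrier Lam"
  then show "(\<phi> i (mact (liftm X) v a), mzero M, \<zero>\<^bsub>S\<^esub>) = (\<phi> i v, mzero M, \<zero>\<^bsub>S\<^esub>) \<otimes>\<^bsub>Lam\<^esub> a"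
    using db_act[OF rm db] tri_fst_mem[OF a]
    by (cases a rule: prod_cases3) auto
qed (use db_b[OF rm db] db_phi[OF rm db] in auto)

lemma liftm_proj: "projective R X \<Longrightarrow> projective Lam (liftm X)"
  using projective_dbasis[of R X] db_projective[OF liftm_rm liftm_dbasis] projective_rm by metis

end

lemma sub_msum:
  assumes rm: "right_module A X" and rC: "right_module A (X\<lparr>mcarrier := C\<rparr>)"
    and f: "\<And>i. i \<in> F \<Longrightarrow> f i \<in> C" and C: "C \<subseteq> mcarrier X"
  shows "msum (X\<lparr>mcarrier := C\<rparr>) f F = msum X f F"
  using f
proof (induct F rule: infinite_finite_induct)
  case (infinite F) then show ?case by (simp add: msum_def finprod_def)
next
  case empty then show ?case using rm rC by simp
next
  case (insert x F)
  have e1: "msum X f (insert x F) = madd X (f x) (msum X f F)"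
    by (rule msum_insert[OF rm]) (use insert C in auto)
  have e2: "msum (X\<lparr>mcarrier := C\<rparr>) f (insert x F) = madd (X\<lparr>mcarrier := C\<rparr>) (f x) (msum (X\<lparr>mcarrier := C\<rparr>) f F)"
    by (rule msum_insert[OF rC]) (use insert in auto)
  show ?case unfolding e1 e2 using insert by simp
qed

lemma shorten:
  fixes P :: "nat \<Rightarrow> ('r,'q) rmod"
  assumes res: "is_res R M n P d \<epsilon>" and i: "i < n"
    and \<rho>: "lin_map R (P i) (P i) \<rho>"
    and Z1: "\<And>x. x \<in> mcarrier (P i) \<Longrightarrow> \<rho> x \<in> (if i = 0 then mker (P 0) M \<epsilon> else mker (P i) (P (i - 1)) (d (i - 1)))"
    and Z2: "\<And>z. z \<in> (if i = 0 then mker (P 0) M \<epsilon> else mker (P i) (P (i - 1)) (d (i - 1))) \<Longrightarrow> \<rho> z = z"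
  shows "\<exists>P'. is_res R M i P' d \<epsilon>"
proof -
  define Z where "Z = (if i = 0 then mker (P 0) M \<epsilon> else mker (P i) (P (i - 1)) (d (i - 1)))"
  note D = lin_mapD[OF \<rho>]
  have rm: "right_module R (P i)" using D(1) .
  define \<pi> where "\<pi> x = msub (P i) x (\<rho> x)" for x
  have \<pi>lin: "lin_map R (P i) (P i) \<pi>" unfolding \<pi>_def by (rule lin_map_diff[OF lin_map_id[OF rm] \<rho>])
  note DP = lin_mapD[OF \<pi>lin]
  have Zsub: "Z \<subseteq> mcarrier (P i)" by (auto simp: Z_def mker_def)
  have \<rho>\<rho>: "\<rho> (\<rho> x) = \<rho> x" if "x \<in> mcarrier (P i)" for x using Z1[OF that] Z2 by (simp add: Z_def)
  define C where "C = \<pi> ` mcarrier (P i)"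
  have Csub: "C \<subseteq> mcarrier (P i)" using DP(3) by (auto simp: C_def)
  have \<rho>C: "\<rho> c = mzero (P i)" if c: "c \<in> C" for c
  proof -
    obtain x where x: "x \<in> mcarrier (P i)" "c = \<pi> x" using c by (auto simp: C_def)
    have "\<rho> c = msub (P i) (\<rho> x) (\<rho> (\<rho> x))" unfolding x \<pi>_def by (rule lin_map_sub[OF \<rho> x(1) D(3)[OF x(1)]])
    then show ?thesis using \<rho>\<rho>[OF x(1)] D(3)[OF x(1)] rm by simp
  qed
  have CZ: "c \<in> Z \<Longrightarrow> c \<in> C \<Longrightarrow> c = mzero (P i)" for c using Z2 \<rho>C by (force simp: Z_def)
  have z0: "mzero (P i) \<in> C" unfolding C_def using lin_map_zero[OF \<pi>lin] rm_zero[OF rm] by (metis image_eqI)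
  have rC: "right_module R ((P i)\<lparr>mcarrier := C\<rparr>)"
  proof (rule sub_rm[OF rm Csub z0])
    fix x y assume "x \<in> C" "y \<in> C"
    then obtain a b where ab: "a \<in> mcarrier (P i)" "b \<in> mcarrier (P i)" "x = \<pi> a" "y = \<pi> b"
      by (auto simp: C_def)
    then show "madd (P i) x y \<in> C" unfolding C_def using DP(4)[OF ab(1,2)] rm
      by (auto intro!: image_eqI[of _ \<pi> "madd (P i) a b"])
  next
    fix x r assume "x \<in> C" and r: "r \<in> carrier R"
    then obtain a where a: "a \<in> mcarrier (P i)" "x = \<pi> a" by (auto simp: C_def)
    then show "mact (P i) x r \<in> C" unfolding C_def using DP(5)[OF a(1) r] rm r
      by (auto intro!: image_eqI[of _ \<pi> "mact (P i) a r"])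
  qed
  let ?C = "(P i)\<lparr>mcarrier := C\<rparr>"
  have pC: "projective R ?C"
  proof -
    have Pp: "projective R (P i)" using res_proj[OF res] i by simp
    obtain \<phi> where db: "dbasis R (P i) (mcarrier (P i)) (\<lambda>p. p) \<phi>" using projective_dbasis[OF Pp] by blast
    have "dbasis R ?C (mcarrier (P i)) \<pi> \<phi>"
      unfolding dbasis_def
    proof (intro conjI ballI)
      fix v assume v: "v \<in> mcarrier ?C"
      then have vC: "v \<in> C" and vP: "v \<in> mcarrier (P i)" using Csub by auto
      obtain F where F: "finite F" "F \<subseteq> mcarrier (P i)" "\<forall>p\<in>mcarrier (P i) - F. \<phi> p v = \<zero>\<^bsub>R\<^esub>"
        "v = msum (P i) (\<lambda>p. mact (P i) p (\<phi> p v)) F"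
        using db vP unfolding dbasis_def by blast
      have \<pi>v: "\<pi> v = v" using vC \<rho>C vP rm by (simp add: \<pi>_def)
      have "v = \<pi> (msum (P i) (\<lambda>p. mact (P i) p (\<phi> p v)) F)" using \<pi>v F(4) by simp
      also have "\<dots> = msum (P i) (\<lambda>p. \<pi> (mact (P i) p (\<phi> p v))) F"
        by (rule msum_lin[OF \<pi>lin]) (use F vP rm db_phi[OF rm db] in auto)
      also have "\<dots> = msum (P i) (\<lambda>p. mact ?C (\<pi> p) (\<phi> p v)) F"
        by (rule msum_cong[OF rm refl]) (use F vP rm db_phi[OF rm db] DP in auto)
      also have "\<dots> = msum ?C (\<lambda>p. mact ?C (\<pi> p) (\<phi> p v)) F"
        by (rule sub_msum[OF rm rC _ Csub, symmetric])
          (use F vP db_phi[OF rm db] rC in \<open>auto simp: C_def intro!: rm_act[OF rC, simplified]\<close>)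
      finally show "\<exists>F. finite F \<and> F \<subseteq> mcarrier (P i) \<and> (\<forall>p\<in>mcarrier (P i) - F. \<phi> p v = \<zero>\<^bsub>R\<^esub>) \<and>
        v = msum ?C (\<lambda>p. mact ?C (\<pi> p) (\<phi> p v)) F" using F by blast
    qed (use db_phi[OF rm db] db_add[OF rm db] db_act[OF rm db] Csub DP(3) in \<open>auto simp: C_def\<close>)
    then show ?thesis by (rule db_projective[OF rC])
  qed
  have gpi: "g (\<pi> x) = g x" if g: "lin_map R (P i) Y g" and gZ: "\<And>z. z \<in> Z \<Longrightarrow> g z = mzero Y"
    and x: "x \<in> mcarrier (P i)" for g x and Y :: "('r, 'y) rmod"
  proof -
    have "g (\<pi> x) = msub Y (g x) (g (\<rho> x))" unfolding \<pi>_def by (rule lin_map_sub[OF g x D(3)[OF x]])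
    also have "g (\<rho> x) = mzero Y" using gZ Z1[OF x] by (simp add: Z_def)
    finally show ?thesis using lin_mapD[OF g] x by simp
  qed
  have gimg: "g ` C = g ` mcarrier (P i)" if g: "lin_map R (P i) Y g" and gZ: "\<And>z. z \<in> Z \<Longrightarrow> g z = mzero Y"
    for g and Y :: "('r, 'y) rmod"
    unfolding C_def using gpi[OF g gZ] by (force simp: image_iff)
  have gker: "mker ?C Y g = {mzero (P i)}" if g: "lin_map R (P i) Y g" and Zg: "Z = mker (P i) Y g"
    for g and Y :: "('r, 'y) rmod"
    using CZ z0 lin_map_zero[OF g] Csub Zg by (auto simp: mker_def)
  define P' where "P' j = (if j = i then ?C else P j)" for j
  show ?thesis
  proof (rule exI[of _ P'], unfold is_res_def, intro conjI allI impI)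
    fix k assume "k \<le> i" then show "projective R (P' k)" using pC res_proj[OF res] i by (simp add: P'_def)
  next
    show "lin_map R (P' 0) M \<epsilon>"
    proof (cases "i = 0")
      case True then show ?thesis using sub_lin_dom[OF res_e[OF res], of C] rC Csub by (simp add: P'_def)
    next
      case False then show ?thesis using res_e[OF res] by (simp add: P'_def)
    qed
  next
    have "\<epsilon> ` C = \<epsilon> ` mcarrier (P 0)" if i0: "i = 0"
    proof -
      have "\<epsilon> ` C = \<epsilon> ` mcarrier (P i)" by (rule gimg) (use res_e[OF res] i0 in \<open>auto simp: Z_def mker_def\<close>)
      then show ?thesis using i0 by simp
    qed
    then show "\<epsilon> ` mcarrier (P' 0) = mcarrier M" using res_e_onto[OF res] by (auto simp: P'_def)
  next
    fix k assume k: "k < i"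
    have "lin_map R (P (Suc k)) (P k) (d k)" using res_d[OF res] k i by simp
    then show "lin_map R (P' (Suc k)) (P' k) (d k)"
    proof (cases "Suc k = i")
      case True
      with \<open>lin_map R (P (Suc k)) (P k) (d k)\<close> show ?thesis
        using sub_lin_dom[of R "P (Suc k)" "P k" "d k" C] rC Csub k by (simp add: P'_def)
    next
      case False then show ?thesis using k \<open>lin_map R (P (Suc k)) (P k) (d k)\<close> by (simp add: P'_def)
    qed
  next
    show "mker (P' 0) M \<epsilon> = (if i = 0 then {mzero (P' 0)} else d 0 ` mcarrier (P' 1))"
    proof (cases "i = 0")
      case True
      have "mker ?C M \<epsilon> = {mzero (P i)}" by (rule gker) (use res_e[OF res] True in \<open>auto simp: Z_def\<close>)
      then show ?thesis using True by (simp add: P'_def)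
    next
      case False
      then have "mker (P 0) M \<epsilon> = d 0 ` mcarrier (P 1)" using res_ker0[OF res] i by simp
      moreover have "d 0 ` C = d 0 ` mcarrier (P 1)" if i1: "i = 1"
      proof -
        have "d 0 ` C = d 0 ` mcarrier (P i)" by (rule gimg) (use res_d[OF res] i i1 in \<open>auto simp: Z_def mker_def\<close>)
        then show ?thesis using i1 by simp
      qed
      ultimately show ?thesis using False by (auto simp: P'_def)
    qed
  next
    fix k assume k: "k < i"
    show "mker (P' (Suc k)) (P' k) (d k) = (if Suc k < i then d (Suc k) ` mcarrier (P' (Suc (Suc k))) else {mzero (P' (Suc k))})"
    proof (cases "Suc k < i")
      case True
      then have "mker (P (Suc k)) (P k) (d k) = d (Suc k) ` mcarrier (P (Suc (Suc k)))" using res_ker[OF res, of k] i by simp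
      moreover have "d (Suc k) ` C = d (Suc k) ` mcarrier (P (Suc (Suc k)))" if i2: "i = Suc (Suc k)"
      proof -
        have "d (Suc k) ` C = d (Suc k) ` mcarrier (P i)" by (rule gimg) (use res_d[OF res] i i2 in \<open>auto simp: Z_def mker_def\<close>)
        then show ?thesis using i2 by simp
      qed
      ultimately show ?thesis using True by (auto simp: P'_def)
    next
      case False
      then have ik: "i = Suc k" using k by simp
      have "mker ?C (P k) (d k) = {mzero (P i)}"
        by (rule gker) (use res_d[OF res] i ik in \<open>auto simp: Z_def\<close>)
      then show ?thesis using False ik by (simp add: P'_def)
    qed
  qed
qed

definition encT :: "'s \<Rightarrow> ('r \<times> 'm \<times> 's) list set" where
  "encT s = {[(undefined, undefined, s)]}"
definition enc0 :: "'l \<Rightarrow> ('l list set \<times> 'l \<times> nat \<Rightarrow> 'l)" where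
  "enc0 x = (\<lambda>_. x)"
definition enc :: "('m \<times> 'r \<times> nat \<Rightarrow> 'r) \<Rightarrow> (('r \<times> 'm \<times> 's) list set \<times> ('r \<times> 'm \<times> 's) \<times> nat \<Rightarrow> ('r \<times> 'm \<times> 's))" where
  "enc f = (\<lambda>(X, l, j). (f (fst (snd l), fst l, j), undefined, undefined))"

lemma inj_encT: "inj_on encT A" by (auto simp: inj_on_def encT_def)
lemma inj_enc0: "inj_on enc0 A" by (auto simp: inj_on_def enc0_def fun_eq_iff)
lemma inj_enc: "inj_on enc A"
proof (rule inj_onI)
  fix f g :: "'m \<times> 'r \<times> nat \<Rightarrow> 'r" assume "(enc f :: ('r \<times> 'm \<times> 's) list set \<times> ('r \<times> 'm \<times> 's) \<times> nat \<Rightarrow> ('r \<times> 'm \<times> 's)) = enc g"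
  then have "\<And>X r m s j. fst (enc f (X, (r, m, s), j) :: 'r \<times> 'm \<times> 's) = fst (enc g (X, (r, m, s), j) :: 'r \<times> 'm \<times> 's)" by simp
  then show "f = g" by (auto simp: enc_def fun_eq_iff)
qed

context tri
begin

definition "Emod = (Amod Lam)\<lparr>mcarrier := {\<zero>\<^bsub>R\<^esub>} \<times> mcarrier M \<times> carrier S\<rparr>"
definition "e2 = (\<zero>\<^bsub>R\<^esub>, mzero M, \<one>\<^bsub>S\<^esub>)"
definition T0 :: "('r \<times> 'm \<times> 's, 's) rmod" where
  "T0 = \<lparr>mcarrier = carrier S, mzero = \<zero>\<^bsub>S\<^esub>, madd = add S, mact = (\<lambda>t l. t \<otimes>\<^bsub>S\<^esub> snd (snd l))\<rparr>"
definition eps0 :: "'r \<times> 'm \<times> 's \<Rightarrow> 's" where "eps0 l = snd (snd l)"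
definition delta0 :: "('q \<Rightarrow> 'm) \<Rightarrow> 'q \<Rightarrow> 'r \<times> 'm \<times> 's" where "delta0 \<epsilon> x = (\<zero>\<^bsub>R\<^esub>, \<epsilon> x, \<zero>\<^bsub>S\<^esub>)"

lemma E_simps[simp]: "mcarrier Emod = {\<zero>\<^bsub>R\<^esub>} \<times> mcarrier M \<times> carrier S" "mzero Emod = \<zero>\<^bsub>Lam\<^esub>"
  "madd Emod = add Lam" "mact Emod = mult Lam"
  by (simp_all add: Emod_def Amod_def)

lemma E_rm: "right_module Lam Emod"
  unfolding Emod_def
proof (rule sub_rm[OF Amod_rm[OF tri_ring]])
  show "{\<zero>\<^bsub>R\<^esub>} \<times> mcarrier M \<times> carrier S \<subseteq> mcarrier (Amod Lam)" by (auto simp: Amod_def tri_carrier)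
  show "mzero (Amod Lam) \<in> {\<zero>\<^bsub>R\<^esub>} \<times> mcarrier M \<times> carrier S" by (simp add: Amod_def tri_zero)
next
  fix x y assume "x \<in> {\<zero>\<^bsub>R\<^esub>} \<times> mcarrier M \<times> carrier S" "y \<in> {\<zero>\<^bsub>R\<^esub>} \<times> mcarrier M \<times> carrier S"
  then show "madd (Amod Lam) x y \<in> {\<zero>\<^bsub>R\<^esub>} \<times> mcarrier M \<times> carrier S" by (auto simp: Amod_def)
next
  fix x r assume "x \<in> {\<zero>\<^bsub>R\<^esub>} \<times> mcarrier M \<times> carrier S" "r \<in> carrier Lam"
  then show "mact (Amod Lam) x r \<in> {\<zero>\<^bsub>R\<^esub>} \<times> mcarrier M \<times> carrier S"
    by (cases r rule: prod_cases3) (auto simp: Amod_def)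
qed

lemma E_sub: "x \<in> mcarrier Emod \<Longrightarrow> x \<in> carrier Lam" by auto

lemma E_proj: "projective Lam Emod"
proof -
  have "dbasis Lam Emod {()} (\<lambda>_. e2) (\<lambda>_ v. v)"
    unfolding dbasis_def
  proof (intro conjI ballI)
    fix v assume v: "v \<in> mcarrier Emod"
    have "mact Emod e2 v = v" using v by (auto simp: e2_def)
    moreover have "mact Emod e2 v \<in> mcarrier Emod" using v rm_act[OF E_rm, of e2 v] by (auto simp: e2_def)
    ultimately show "\<exists>F. finite F \<and> F \<subseteq> {()} \<and> (\<forall>i\<in>{()} - F. v = \<zero>\<^bsub>Lam\<^esub>) \<and>
        v = msum Emod (\<lambda>i. mact Emod e2 v) F"
      using msum_single[OF E_rm, of "\<lambda>i. mact Emod e2 v" "()"] by (intro exI[of _ "{()}"]) auto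
  qed (auto simp: e2_def Lam.m_closed)
  then show ?thesis by (rule db_projective[OF E_rm])
qed

lemma T0_rm: "right_module Lam T0"
proof -
  have "add_group T0 = \<lparr>carrier = carrier S, mult = add S, one = \<zero>\<^bsub>S\<^esub>\<rparr>" by (simp add: add_group_def T0_def)
  then have "comm_group (add_group T0)" using ring_add_cg[OF S] by simp
  then show ?thesis unfolding right_module_def
    by (auto simp: T0_def tri_ring tri_sss_add tri_sss_mult tri_sss_mem tri_one S.r_distr S.l_distr S.m_assoc)
qed

lemma T0_simps[simp]: "mcarrier T0 = carrier S" "mzero T0 = \<zero>\<^bsub>S\<^esub>" by (simp_all add: T0_def)

lemma eps0_lin: "lin_map Lam Emod T0 eps0"
  by (rule lin_mapI[OF E_rm T0_rm]) (auto simp: eps0_def T0_def tri_sss_mult tri_sss_add)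

lemma eps0_img: "eps0 ` mcarrier Emod = carrier S"
proof
  show "eps0 ` mcarrier Emod \<subseteq> carrier S" by (auto simp: eps0_def)
  show "carrier S \<subseteq> eps0 ` mcarrier Emod"
  proof
    fix s assume s: "s \<in> carrier S"
    have "(\<zero>\<^bsub>R\<^esub>, mzero M, s) \<in> mcarrier Emod" using s by simp
    moreover have "eps0 (\<zero>\<^bsub>R\<^esub>, mzero M, s) = s" by (simp add: eps0_def)
    ultimately show "s \<in> eps0 ` mcarrier Emod" by (metis image_eqI)
  qed
qed

lemma eps0_ker: "mker Emod T0 eps0 = {\<zero>\<^bsub>R\<^esub>} \<times> mcarrier M \<times> {\<zero>\<^bsub>S\<^esub>}"
  by (auto simp: mker_def eps0_def)

lemma delta0_lin: assumes e: "lin_map R P0 M \<epsilon>" shows "lin_map Lam (liftm P0) Emod (delta0 \<epsilon>)"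
proof (rule lin_mapI[OF liftm_rm[OF lin_mapD(1)[OF e]] E_rm])
  note D = lin_mapD[OF e]
  fix x assume "x \<in> mcarrier (liftm P0)" then show "delta0 \<epsilon> x \<in> mcarrier Emod" using D by (simp add: delta0_def)
next
  note D = lin_mapD[OF e]
  fix x y assume "x \<in> mcarrier (liftm P0)" "y \<in> mcarrier (liftm P0)"
  then show "delta0 \<epsilon> (madd (liftm P0) x y) = madd Emod (delta0 \<epsilon> x) (delta0 \<epsilon> y)" using D by (simp add: delta0_def)
next
  note D = lin_mapD[OF e]
  fix x a assume x: "x \<in> mcarrier (liftm P0)" and a: "a \<in> carrier Lam"
  then show "delta0 \<epsilon> (mact (liftm P0) x a) = mact Emod (delta0 \<epsilon> x) a" using D
    by (cases a rule: prod_cases3) (simp add: delta0_def)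
qed

lemma delta0_ker: "lin_map R P0 M \<epsilon> \<Longrightarrow> mker (liftm P0) Emod (delta0 \<epsilon>) = mker P0 M \<epsilon>"
  by (auto simp: mker_def delta0_def tri_zero)

lemma delta0_img: "delta0 \<epsilon> ` X = {\<zero>\<^bsub>R\<^esub>} \<times> (\<epsilon> ` X) \<times> {\<zero>\<^bsub>S\<^esub>}"
  by (auto simp: delta0_def)

end

context tri
begin

definition Tm :: "('r \<times> 'm \<times> 's, ('r \<times> 'm \<times> 's) list set) rmod" where "Tm = mapm encT T0"

definition Qm :: "(nat \<Rightarrow> ('r, 'm \<times> 'r \<times> nat \<Rightarrow> 'r) rmod) \<Rightarrow> nat \<Rightarrow>
   ('r \<times> 'm \<times> 's, ('r \<times> 'm \<times> 's) list set \<times> ('r \<times> 'm \<times> 's) \<times> nat \<Rightarrow> ('r \<times> 'm \<times> 's)) rmod" where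
  "Qm P j = (case j of 0 \<Rightarrow> mapm enc0 Emod | Suc i \<Rightarrow> mapm enc (liftm (P i)))"

definition dQ :: "(nat \<Rightarrow> ('r, 'm \<times> 'r \<times> nat \<Rightarrow> 'r) rmod) \<Rightarrow> (nat \<Rightarrow> ('m \<times> 'r \<times> nat \<Rightarrow> 'r) \<Rightarrow> ('m \<times> 'r \<times> nat \<Rightarrow> 'r))
   \<Rightarrow> (('m \<times> 'r \<times> nat \<Rightarrow> 'r) \<Rightarrow> 'm) \<Rightarrow> nat \<Rightarrow>
   (('r \<times> 'm \<times> 's) list set \<times> ('r \<times> 'm \<times> 's) \<times> nat \<Rightarrow> ('r \<times> 'm \<times> 's)) \<Rightarrow>
   (('r \<times> 'm \<times> 's) list set \<times> ('r \<times> 'm \<times> 's) \<times> nat \<Rightarrow> ('r \<times> 'm \<times> 's))" where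
  "dQ P dP \<epsilon> j = (case j of 0 \<Rightarrow> conjm (liftm (P 0) :: ('r \<times> 'm \<times> 's, _) rmod) enc enc0 (delta0 \<epsilon>)
                      | Suc i \<Rightarrow> conjm (liftm (P (Suc i)) :: ('r \<times> 'm \<times> 's, _) rmod) enc enc (dP i))"

definition epsQ where "epsQ = conjm Emod enc0 encT eps0"

lemmas enc_simps[simp] = mapm_carrier[OF inj_encT] mapm_carrier[OF inj_enc0] mapm_carrier[OF inj_enc]
  mapm_zero[OF inj_encT] mapm_zero[OF inj_enc0] mapm_zero[OF inj_enc]

lemma Qm0: "Qm P 0 = mapm enc0 Emod" by (simp add: Qm_def)
lemma QmS: "Qm P (Suc i) = mapm enc (liftm (P i))" by (simp add: Qm_def)
lemma dQ0: "dQ P dP \<epsilon> 0 = conjm (liftm (P 0) :: ('r \<times> 'm \<times> 's, _) rmod) enc enc0 (delta0 \<epsilon>)" by (simp add: dQ_def)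
lemma dQS: "dQ P dP \<epsilon> (Suc i) = conjm (liftm (P (Suc i)) :: ('r \<times> 'm \<times> 's, _) rmod) enc enc (dP i)" by (simp add: dQ_def)

lemma upper:
  assumes res: "is_res R M n P dP \<epsilon>"
  shows "is_res Lam Tm (Suc n) (Qm P) (dQ P dP \<epsilon>) epsQ"
  unfolding is_res_def
proof (intro conjI allI impI)
  fix k assume k: "k \<le> Suc n"
  show "projective Lam (Qm P k)"
  proof (cases k)
    case 0 then show ?thesis using mapm_proj[OF inj_enc0 E_proj] by (simp add: Qm0)
  next
    case (Suc i) then show ?thesis using mapm_proj[OF inj_enc liftm_proj[OF res_proj[OF res]]] k
      by (simp add: QmS)
  qed
next
  show "lin_map Lam (Qm P 0) Tm epsQ"
    unfolding Qm0 Tm_def epsQ_def by (rule conj_lin[OF eps0_lin inj_enc0 inj_encT])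
next
  show "epsQ ` mcarrier (Qm P 0) = mcarrier Tm"
    unfolding Qm0 Tm_def epsQ_def using conj_img[OF inj_enc0, of Emod encT eps0] eps0_img inj_enc0 inj_encT
    by simp
next
  fix k assume k: "k < Suc n"
  show "lin_map Lam (Qm P (Suc k)) (Qm P k) (dQ P dP \<epsilon> k)"
  proof (cases k)
    case 0 then show ?thesis
      using conj_lin[OF delta0_lin[OF res_e[OF res]] inj_enc inj_enc0] by (simp add: Qm0 QmS dQ0)
  next
    case (Suc i) then show ?thesis
      using conj_lin[OF liftm_lin[OF res_d[OF res]] inj_enc inj_enc] k by (simp add: QmS dQS)
  qed
next
  have "mker (Qm P 0) Tm epsQ = enc0 ` ({\<zero>\<^bsub>R\<^esub>} \<times> mcarrier M \<times> {\<zero>\<^bsub>S\<^esub>})"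
    unfolding Qm0 Tm_def epsQ_def using conj_ker[OF eps0_lin inj_enc0 inj_encT] eps0_ker by simp
  also have "\<dots> = dQ P dP \<epsilon> 0 ` mcarrier (Qm P 1)"
  proof -
    have "dQ P dP \<epsilon> 0 ` mcarrier (Qm P 1) = enc0 ` (delta0 \<epsilon> ` mcarrier (liftm (P 0) :: ('r \<times> 'm \<times> 's, _) rmod))"
    proof -
      have Q1: "Qm P 1 = mapm enc (liftm (P 0))" using QmS[of P 0] by simp
      show ?thesis unfolding dQ0 Q1 by (rule conj_img[OF inj_enc])
    qed
    then show ?thesis using delta0_img[of \<epsilon> "mcarrier (P 0)"] res_e_onto[OF res] by simp
  qed
  finally show "mker (Qm P 0) Tm epsQ = (if Suc n = 0 then {mzero (Qm P 0)} else dQ P dP \<epsilon> 0 ` mcarrier (Qm P 1))"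
    by simp
next
  fix k assume k: "k < Suc n"
  show "mker (Qm P (Suc k)) (Qm P k) (dQ P dP \<epsilon> k) =
    (if Suc k < Suc n then dQ P dP \<epsilon> (Suc k) ` mcarrier (Qm P (Suc (Suc k))) else {mzero (Qm P (Suc k))})"
  proof (cases k)
    case 0
    have "mker (Qm P (Suc k)) (Qm P k) (dQ P dP \<epsilon> k) = enc ` mker (P 0) M \<epsilon>"
      using conj_ker[OF delta0_lin[OF res_e[OF res]] inj_enc inj_enc0] delta0_ker[OF res_e[OF res]] 0
      by (simp add: Qm0 QmS dQ0)
    also have "\<dots> = (if Suc k < Suc n then dQ P dP \<epsilon> (Suc k) ` mcarrier (Qm P (Suc (Suc k))) else {mzero (Qm P (Suc k))})"
    proof -
      have "dQ P dP \<epsilon> (Suc 0) ` mcarrier (Qm P (Suc (Suc 0))) = enc ` (dP 0 ` mcarrier (liftm (P (Suc 0)) :: ('r \<times> 'm \<times> 's, _) rmod))"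
        unfolding dQS QmS by (rule conj_img[OF inj_enc])
      then show ?thesis using res_ker0[OF res] 0 by (simp add: QmS)
    qed
    finally show ?thesis .
  next
    case (Suc i)
    have i: "i < n" using k Suc by simp
    have "mker (Qm P (Suc k)) (Qm P k) (dQ P dP \<epsilon> k) = enc ` mker (P (Suc i)) (P i) (dP i)"
      using conj_ker[OF liftm_lin[OF res_d[OF res i]] inj_enc inj_enc] Suc
      by (simp add: QmS dQS)
    also have "\<dots> = (if Suc k < Suc n then dQ P dP \<epsilon> (Suc k) ` mcarrier (Qm P (Suc (Suc k))) else {mzero (Qm P (Suc k))})"
    proof -
      have "dQ P dP \<epsilon> (Suc (Suc i)) ` mcarrier (Qm P (Suc (Suc (Suc i)))) = enc ` (dP (Suc i) ` mcarrier (liftm (P (Suc (Suc i))) :: ('r \<times> 'm \<times> 's, _) rmod))"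
        unfolding dQS QmS by (rule conj_img[OF inj_enc])
      then show ?thesis using res_ker[OF res i] Suc by (simp add: QmS)
    qed
    finally show ?thesis .
  qed
qed

end

context tri
begin

lemma Tm_rm: "right_module Lam Tm" unfolding Tm_def by (rule mapm_rm[OF inj_encT T0_rm])

lemma Tm_fin_gen: "fin_gen Lam Tm"
  unfolding fin_gen_def
proof (intro conjI Tm_rm exI[of _ "{encT \<one>\<^bsub>S\<^esub>}"] ballI)
  show "{encT \<one>\<^bsub>S\<^esub>} \<subseteq> mcarrier Tm" by (simp add: Tm_def)
next
  fix x assume "x \<in> mcarrier Tm"
  then obtain t where t: "t \<in> carrier S" "x = encT t" by (auto simp: Tm_def)
  let ?c = "\<lambda>_. (\<zero>\<^bsub>R\<^esub>, mzero M, t)"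
  have "mact Tm (encT \<one>\<^bsub>S\<^esub>) (?c (encT \<one>\<^bsub>S\<^esub>)) = encT t"
    unfolding Tm_def using t by (simp add: mapm_act[OF inj_encT] T0_def)
  moreover have "encT t \<in> mcarrier Tm" using t by (simp add: Tm_def)
  ultimately have "msum Tm (\<lambda>g. mact Tm g (?c g)) {encT \<one>\<^bsub>S\<^esub>} = encT t"
    using msum_single[OF Tm_rm, of "\<lambda>g. mact Tm g (?c g)" "encT \<one>\<^bsub>S\<^esub>"] by simp
  then show "\<exists>c. (\<forall>g\<in>{encT \<one>\<^bsub>S\<^esub>}. c g \<in> carrier Lam) \<and> x = msum Tm (\<lambda>g. mact Tm g (c g)) {encT \<one>\<^bsub>S\<^esub>}"
    using t by (intro exI[of _ ?c]) auto
qed simp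

lemma epsQ_ker: "mker (Qm P 0) Tm epsQ = enc0 ` ({\<zero>\<^bsub>R\<^esub>} \<times> mcarrier M \<times> {\<zero>\<^bsub>S\<^esub>})"
  unfolding Qm0 Tm_def epsQ_def using conj_ker[OF eps0_lin inj_enc0 inj_encT] eps0_ker by simp

lemma lower:
  fixes P :: "nat \<Rightarrow> ('r, 'm \<times> 'r \<times> nat \<Rightarrow> 'r) rmod"
  assumes res: "is_res R M n P dP \<epsilon>" and minimal: "\<And>j. pdim_le R M j \<Longrightarrow> n \<le> j"
    and nz: "mcarrier M \<noteq> {mzero M}"
    and R2: "is_res Lam Tm k Q' d' e'"
  shows "Suc n \<le> k"
proof (rule ccontr)
  assume "\<not> Suc n \<le> k" then have kN: "k < Suc n" by simp
  obtain \<rho> where \<rho>: "lin_map Lam (Qm P k) (Qm P k) \<rho>"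
    and Z1: "\<And>x. x \<in> mcarrier (Qm P k) \<Longrightarrow> \<rho> x \<in> (if k = 0 then mker (Qm P 0) Tm epsQ
           else mker (Qm P k) (Qm P (k - 1)) (dQ P dP \<epsilon> (k - 1)))"
    and Z2: "\<And>z. z \<in> (if k = 0 then mker (Qm P 0) Tm epsQ
           else mker (Qm P k) (Qm P (k - 1)) (dQ P dP \<epsilon> (k - 1))) \<Longrightarrow> \<rho> z = z"
    using comparison[OF upper[OF res] R2 kN] by blast
  show False
  proof (cases k)
    case 0
    define \<rho>' where "\<rho>' x = inv_into (mcarrier Emod) enc0 (\<rho> (enc0 x))" for x
    have lin: "lin_map Lam Emod Emod \<rho>'" unfolding \<rho>'_def
      by (rule conj_back[OF _ inj_enc0 inj_enc0 E_rm E_rm]) (use \<rho> 0 in \<open>simp add: Qm0\<close>)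
    let ?K = "{\<zero>\<^bsub>R\<^esub>} \<times> mcarrier M \<times> {\<zero>\<^bsub>S\<^esub>}"
    have Ksub: "?K \<subseteq> mcarrier Emod" by auto
    have r1: "\<rho>' x \<in> ?K" if x: "x \<in> mcarrier Emod" for x
    proof -
      have "\<rho> (enc0 x) \<in> enc0 ` ?K" using Z1[of "enc0 x"] x 0 epsQ_ker[of P] by (simp add: Qm0)
      then obtain z where z: "z \<in> ?K" "\<rho> (enc0 x) = enc0 z" by blast
      moreover have "z \<in> mcarrier Emod" using z(1) Ksub by blast
      ultimately have "\<rho>' x = z" unfolding \<rho>'_def using inv_into_f_f[OF inj_enc0, of z "mcarrier Emod"] by simp
      then show ?thesis using z by simp
    qed
    have r2: "\<rho>' z = z" if z: "z \<in> ?K" for z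
    proof -
      have "\<rho> (enc0 z) = enc0 z" using Z2[of "enc0 z"] z 0 epsQ_ker[of P] by simp
      moreover have "z \<in> mcarrier Emod" using z Ksub by blast
      ultimately show ?thesis unfolding \<rho>'_def using inv_into_f_f[OF inj_enc0, of z "mcarrier Emod"] by simp
    qed
    obtain m where m: "m \<in> mcarrier M" "m \<noteq> mzero M" using nz rm_zero[OF rmM] by blast
    let ?z = "(\<zero>\<^bsub>R\<^esub>, m, \<zero>\<^bsub>S\<^esub>)"
    have zK: "?z \<in> ?K" using m by simp
    have e2E: "e2 \<in> mcarrier Emod" by (simp add: e2_def)
    have "mact Emod e2 ?z = ?z" using m by (simp add: e2_def)
    then have "?z = \<rho>' (mact Emod e2 ?z)" using r2[OF zK] by simp
    also have "\<dots> = mact Emod (\<rho>' e2) ?z" using lin_mapD(5)[OF lin e2E, of ?z] m by simp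
    also obtain \<mu> where "\<rho>' e2 = (\<zero>\<^bsub>R\<^esub>, \<mu>, \<zero>\<^bsub>S\<^esub>)" "\<mu> \<in> mcarrier M" using r1[OF e2E] by auto
    then have "mact Emod (\<rho>' e2) ?z = (\<zero>\<^bsub>R\<^esub>, mzero M, \<zero>\<^bsub>S\<^esub>)" using m by simp
    finally show False using m by simp
  next
    case (Suc i)
    have i: "i < n" using kN Suc by simp
    let ?Y = "liftm (P i) :: ('r \<times> 'm \<times> 's, 'm \<times> 'r \<times> nat \<Rightarrow> 'r) rmod"
    define \<rho>' where "\<rho>' x = inv_into (mcarrier ?Y) enc (\<rho> (enc x))" for x
    have rmP: "right_module R (P i)" using projective_rm[OF res_proj[OF res]] i by simp
    have linL: "lin_map Lam ?Y ?Y \<rho>'" unfolding \<rho>'_def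
      by (rule conj_back[OF _ inj_enc inj_enc liftm_rm[OF rmP] liftm_rm[OF rmP]]) (use \<rho> Suc in \<open>simp add: QmS\<close>)
    have lin: "lin_map R (P i) (P i) \<rho>'" by (rule liftm_lin_back[OF linL rmP rmP])
    define Z' where "Z' = (if i = 0 then mker (P 0) M \<epsilon> else mker (P i) (P (i - 1)) (dP (i - 1)))"
    have Z'sub: "Z' \<subseteq> mcarrier (P i)" by (auto simp: Z'_def mker_def)
    have ZZ: "mker (Qm P k) (Qm P (k - 1)) (dQ P dP \<epsilon> (k - 1)) = enc ` Z'"
    proof (cases i)
      case 0
      then show ?thesis
        using conj_ker[OF delta0_lin[OF res_e[OF res]] inj_enc inj_enc0] delta0_ker[OF res_e[OF res]] Suc
        by (simp add: Qm0 QmS dQ0 Z'_def)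
    next
      case (Suc i')
      have "i' < n" using i Suc by simp
      then show ?thesis
        using conj_ker[OF liftm_lin[OF res_d[OF res \<open>i' < n\<close>]] inj_enc inj_enc] Suc \<open>k = Suc i\<close>
        by (simp add: QmS dQS Z'_def)
    qed
    have r1: "\<rho>' x \<in> Z'" if x: "x \<in> mcarrier (P i)" for x
    proof -
      have "\<rho> (enc x) \<in> enc ` Z'" using Z1[of "enc x"] x Suc ZZ by (simp add: QmS)
      then obtain z where z: "z \<in> Z'" "\<rho> (enc x) = enc z" by blast
      moreover have "z \<in> mcarrier ?Y" using z(1) Z'sub by auto
      ultimately have "\<rho>' x = z" unfolding \<rho>'_def using inv_into_f_f[OF inj_enc, of z "mcarrier ?Y"] by simp
      then show ?thesis using z by simp
    qed
    have r2: "\<rho>' z = z" if z: "z \<in> Z'" for z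
    proof -
      have "\<rho> (enc z) = enc z" using Z2[of "enc z"] z Suc ZZ by simp
      moreover have "z \<in> mcarrier ?Y" using z Z'sub by auto
      ultimately show ?thesis unfolding \<rho>'_def using inv_into_f_f[OF inj_enc, of z "mcarrier ?Y"] by simp
    qed
    obtain P' where "is_res R M i P' dP \<epsilon>"
      using shorten[OF res i lin] r1 r2 unfolding Z'_def by blast
    then have "pdim_le R M i" unfolding pdim_le_iff by blast
    then show False using minimal i by fastforce
  qed
qed

end

theorem proposition2p3:
  fixes R :: "('r, 'a) ring_scheme" and S :: "('s, 'b) ring_scheme"
    and M :: "('r, 'm) rmod" and L :: "'s \<Rightarrow> 'm \<Rightarrow> 'm"
  assumes "ring R" and "ring S" and "bimodule S R M L"
    and "mcarrier M \<noteq> {mzero M}"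
    and "pdim R M < \<infinity>"
  shows "pdim R M + 1 \<le> fpdim (tri_ring R S M L)"
proof -
  interpret tri R S M L using assms(1-3) by (rule tri.intro)
  let ?A = "{enat n | n. pdim_le R M n}"
  have ne: "?A \<noteq> {}"
  proof
    assume "?A = {}"
    then have "pdim R M = \<infinity>" unfolding pdim_def by (simp add: Inf_enat_def)
    then show False using assms(5) by simp
  qed
  then obtain j0 where "enat j0 \<in> ?A" by blast
  have "pdim R M \<in> ?A" unfolding pdim_def Inf_enat_def using ne LeastI[of "\<lambda>x. x \<in> ?A", OF \<open>enat j0 \<in> ?A\<close>]
    by simp
  then obtain n where pn: "pdim R M = enat n" and pl: "pdim_le R M n" by blast
  have minimal: "n \<le> j" if "pdim_le R M j" for j
  proof -
    have "pdim R M \<le> enat j" unfolding pdim_def by (rule Inf_lower) (use that in blast)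
    then show ?thesis using pn by simp
  qed
  obtain P :: "nat \<Rightarrow> ('r, 'm \<times> 'r \<times> nat \<Rightarrow> 'r) rmod" and dP \<epsilon> where res: "is_res R M n P dP \<epsilon>"
    using pl unfolding pdim_le_iff by blast
  have up: "pdim_le Lam Tm (Suc n)" unfolding pdim_le_iff using upper[OF res] by blast
  have low: "Suc n \<le> k" if pk: "pdim_le Lam Tm k" for k
  proof -
    obtain Q' :: "nat \<Rightarrow> ('r \<times> 'm \<times> 's, ('r \<times> 'm \<times> 's) list set \<times> ('r \<times> 'm \<times> 's) \<times> nat \<Rightarrow> ('r \<times> 'm \<times> 's)) rmod"
      and d' e' where "is_res Lam Tm k Q' d' e'" using pk unfolding pdim_le_iff by blast
    from lower[OF res _ assms(4) this] minimal show ?thesis by blast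
  qed
  have pT: "pdim Lam Tm = enat (Suc n)"
  proof (rule antisym)
    show "pdim Lam Tm \<le> enat (Suc n)" unfolding pdim_def by (rule Inf_lower) (use up in blast)
    show "enat (Suc n) \<le> pdim Lam Tm" unfolding pdim_def by (rule Inf_greatest) (auto dest: low)
  qed
  have "pdim Lam Tm \<le> fpdim Lam" unfolding fpdim_def
    by (rule Sup_upper) (use Tm_fin_gen pT in \<open>auto intro!: exI[of _ Tm]\<close>)
  moreover have "pdim R M + 1 = enat (Suc n)" using pn by (simp add: one_enat_def)
  ultimately show ?thesis using pT by simp
qed

end
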